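(* Let $\mathcal T=\{(x,y):0\le y\le x\le1\}$ and let $B_g,B_{g'},B_f,B_{f_x}>0$ be arbitrary. Consider $$u_t(x,t)=u_x(x,t)+g(x)u(0,t)+\int_0^xf(x,y)u(y,t)\,dy,\quad x\in[0,1),\qquad u(1,t)=U(t),$$ with any $g\in C^1([0,1])$ and $f\in C^1(\mathcal T)$ whose derivatives are Lipschitz and which satisfy $\|g\|_\infty\le B_g$, $\|g'\|_\infty\le B_{g'}$, $\|f\|_\infty\le B_f$, $\|f_x\|_\infty\le B_{f_x}$. There exists a sufficiently small $\epsilon^*(B_g,B_{g'},B_f,B_{f_x})>0$ such that, if $\hat k=\hat{\mathcal Q}(g,f)$ is a neural operator gain kernel with $|k-\hat k|+|k_x-\hat k_x|+|k_y-\hat k_y|<\epsilon$ on $\mathcal T$ for some $\epsilon\in(0,\epsilon^* )$, where $k=\mathcal Q(g,f)$ is the exact backstepping kernel, then the feedback $U(t)=\int_0^1\hat k(1,y)u(y,t)\,dy$ ensures that there exist $M,c^*>0$ such that closed-loop solutions satisfy $$\|u(t)\|\le Me^{-c^*t/2}\|u(0)\|\quad\forall t\ge0.$$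
   Context: The exact backstepping kernel $k=\mathcal Q(g,f)$ is the solution on $\mathcal T$ of $k(x,y)=-g(x-y)-\int_0^y f(x-y+\xi,\xi)d\xi+\int_0^{x-y}g(\xi)k(x-y,\xi)d\xi+\int_0^y\int_0^{x-y}f(\xi+\eta,\eta)k(x-y+\eta,\xi+\eta)d\xi d\eta$. A neural operator $\hat{\mathcal Q}$ is a DeepONet-type map $(g,f)\mapsto\sum_{k=1}^p g^{\mathcal N}(\mathbf s;\vartheta^{(k)})f^{\mathcal N}((x,y);\theta^{(k)})$ built from neural networks evaluated on point samples $\mathbf s$ of $(g,f)$. $\|\cdot\|_\infty$ is the supremum norm and $\|u(t)\|$ is the $L^2[0,1]$ norm of $u(\cdot,t)$. *)

theory Defs
  imports "HOL-Analysis.Analysis"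
begin

definition Tri :: "(real \<times> real) set" where
  "Tri = {(x, y). 0 \<le> y \<and> y \<le> x \<and> x \<le> 1}"

definition admissible_g :: "real \<Rightarrow> real \<Rightarrow> (real \<Rightarrow> real) \<Rightarrow> (real \<Rightarrow> real) \<Rightarrow> bool" where
  "admissible_g Bg Bg' g g' \<longleftrightarrow>
     (\<forall>x\<in>{0..1}. (g has_real_derivative g' x) (at x within {0..1})) \<and>
     continuous_on {0..1} g' \<and>
     (\<exists>L. L-lipschitz_on {0..1} g') \<and>
     (\<forall>x\<in>{0..1}. \<bar>g x\<bar> \<le> Bg) \<and>
     (\<forall>x\<in>{0..1}. \<bar>g' x\<bar> \<le> Bg')"

definition C1_on_Tri :: "(real \<times> real \<Rightarrow> real) \<Rightarrow> (real \<times> real \<Rightarrow> real) \<Rightarrow> (real \<times> real \<Rightarrow> real) \<Rightarrow> bool" where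
  "C1_on_Tri h hx hy \<longleftrightarrow>
     (\<forall>p\<in>Tri. (h has_derivative (\<lambda>(a, b). hx p * a + hy p * b)) (at p within Tri)) \<and>
     continuous_on Tri hx \<and> continuous_on Tri hy"

definition admissible_f :: "real \<Rightarrow> real \<Rightarrow> (real \<times> real \<Rightarrow> real) \<Rightarrow> (real \<times> real \<Rightarrow> real) \<Rightarrow> (real \<times> real \<Rightarrow> real) \<Rightarrow> bool" where
  "admissible_f Bf Bfx f fx fy \<longleftrightarrow>
     C1_on_Tri f fx fy \<and>
     (\<exists>L. L-lipschitz_on Tri fx) \<and> (\<exists>L. L-lipschitz_on Tri fy) \<and>
     (\<forall>p\<in>Tri. \<bar>f p\<bar> \<le> Bf) \<and>
     (\<forall>p\<in>Tri. \<bar>fx p\<bar> \<le> Bfx)"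

definition kernel_equation :: "(real \<Rightarrow> real) \<Rightarrow> (real \<times> real \<Rightarrow> real) \<Rightarrow> (real \<times> real \<Rightarrow> real) \<Rightarrow> bool" where
  "kernel_equation g f k \<longleftrightarrow>
     (\<forall>(x, y)\<in>Tri.
        k (x, y) = - g (x - y)
                   - integral {0..y} (\<lambda>\<xi>. f (x - y + \<xi>, \<xi>))
                   + integral {0..x - y} (\<lambda>\<xi>. g \<xi> * k (x - y, \<xi>))
                   + integral {0..y} (\<lambda>\<eta>. integral {0..x - y}
                        (\<lambda>\<xi>. f (\<xi> + \<eta>, \<eta>) * k (x - y + \<eta>, \<xi> + \<eta>))))"

definition closed_loop_solution ::
  "(real \<Rightarrow> real) \<Rightarrow> (real \<times> real \<Rightarrow> real) \<Rightarrow> (real \<times> real \<Rightarrow> real) \<Rightarrow> (real \<Rightarrow> real \<Rightarrow> real) \<Rightarrow> bool" where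
  "closed_loop_solution g f khat u \<longleftrightarrow>
     (\<exists>ux ut.
        continuous_on ({0..1} \<times> {0..}) ux \<and> continuous_on ({0..1} \<times> {0..}) ut \<and>
        (\<forall>p\<in>{0..1} \<times> {0..}.
           ((\<lambda>(x, t). u x t) has_derivative (\<lambda>(a, b). ux p * a + ut p * b))
             (at p within {0..1} \<times> {0..})) \<and>
        (\<forall>x\<in>{0..<1}. \<forall>t\<ge>0.
           ut (x, t) = ux (x, t) + g x * u 0 t + integral {0..x} (\<lambda>y. f (x, y) * u y t))) \<and>
     (\<forall>t\<ge>0. u 1 t = integral {0..1} (\<lambda>y. khat (1, y) * u y t))"

definition L2norm :: "(real \<Rightarrow> real) \<Rightarrow> real" where
  "L2norm v = sqrt (integral {0..1} (\<lambda>x. (v x)\<^sup>2))"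

end

theory Submission
  imports Defs
begin

lemma Tri_mem[simp]: "(a, b) \<in> Tri \<longleftrightarrow> 0 \<le> b \<and> b \<le> a \<and> a \<le> 1"
  by (simp add: Tri_def)

lemma compact_Tri: "compact Tri"
proof -
  have "Tri = cbox (0,0) (1,1) \<inter> {p. snd p \<le> fst p}"
    by (auto simp: Tri_def cbox_Pair_iff)
  moreover have "closed {p::real\<times>real. snd p \<le> fst p}"
    by (intro closed_Collect_le continuous_intros)
  ultimately show ?thesis
    by (metis compact_Int_closed compact_cbox)
qed

lemma C1_cont:
  assumes "C1_on_Tri F Fx Fy" shows "continuous_on Tri F"
  using assms unfolding C1_on_Tri_def
  by (meson continuous_on_eq_continuous_within has_derivative_continuous)

lemma C1_line:
  assumes C: "C1_on_Tri F Fx Fy" and s: "s \<in> S"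
    and L: "\<And>s. s \<in> S \<Longrightarrow> (a1 + s*d1, a2 + s*d2) \<in> Tri"
  shows "((\<lambda>s. F (a1 + s*d1, a2 + s*d2)) has_real_derivative
     (Fx (a1+s*d1, a2+s*d2) * d1 + Fy (a1+s*d1, a2+s*d2) * d2)) (at s within S)"
proof -
  have D: "\<And>p. p\<in>Tri \<Longrightarrow> (F has_derivative (\<lambda>(a, b). Fx p * a + Fy p * b)) (at p within Tri)"
    using C by (simp add: C1_on_Tri_def)
  have l: "((\<lambda>s. (a1 + s*d1, a2 + s*d2)) has_derivative (\<lambda>h. (h*d1, h*d2))) (at s within S)"
    by (auto intro!: derivative_eq_intros)
  have "((\<lambda>s. F (a1 + s*d1, a2 + s*d2)) has_derivative
      (\<lambda>h. (\<lambda>(a, b). Fx (a1+s*d1, a2+s*d2) * a + Fy (a1+s*d1, a2+s*d2) * b) (h*d1, h*d2))) (at s within S)"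
    by (rule has_derivative_in_compose2[OF D _ s l]) (use L in auto)
  then show ?thesis
    unfolding has_field_derivative_def
    by (rule has_derivative_eq_rhs) (auto simp: algebra_simps)
qed

lemma integral_scale01:
  fixes h :: "real \<Rightarrow> real"
  assumes "0 \<le> x"
  shows "integral {0..x} h = x * integral {0..1} (\<lambda>s. h (x * s))"
proof (cases "x = 0")
  case True then show ?thesis by simp
next
  case False
  with assms have x: "x > 0" by simp
  have img: "(\<lambda>s. s / x) ` {0..x} = {0..1}"
    using x by (auto simp: image_iff field_simps intro!: bexI[where x="_ * x"])
  have "integral ((\<lambda>s. s / x) ` {0..x}) (\<lambda>s. h (x * s)) = (1 / \<bar>x\<bar>) *\<^sub>R integral {0..x} h"
    by (rule integral_stretch_real) (use x in auto)
  then show ?thesis using x by (simp add: img)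
qed

lemma C1_mult:
  assumes A: "C1_on_Tri a ax ay" and B: "C1_on_Tri b bx bY"
  shows "C1_on_Tri (\<lambda>p. a p * b p) (\<lambda>p. ax p * b p + a p * bx p) (\<lambda>p. ay p * b p + a p * bY p)"
proof -
  have ca: "continuous_on Tri a" using A by (rule C1_cont)
  have cb: "continuous_on Tri b" using B by (rule C1_cont)
  have D: "((\<lambda>p. a p * b p) has_derivative
      (\<lambda>(h, k). (ax p * b p + a p * bx p) * h + (ay p * b p + a p * bY p) * k)) (at p within Tri)"
    if p: "p \<in> Tri" for p
  proof -
    have da: "(a has_derivative (\<lambda>(h, k). ax p * h + ay p * k)) (at p within Tri)"
      using A p by (simp add: C1_on_Tri_def)
    have db: "(b has_derivative (\<lambda>(h, k). bx p * h + bY p * k)) (at p within Tri)"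
      using B p by (simp add: C1_on_Tri_def)
    show ?thesis
      by (rule has_derivative_eq_rhs[OF has_derivative_mult[OF da db]])
         (auto simp: algebra_simps fun_eq_iff)
  qed
  show ?thesis using A B ca cb D unfolding C1_on_Tri_def
    by (auto intro!: continuous_intros)
qed

lemma C1_snd:
  assumes d: "\<And>y. y \<in> {0..1} \<Longrightarrow> (v has_real_derivative v' y) (at y within {0..1})"
    and c: "continuous_on {0..1} v'"
  shows "C1_on_Tri (\<lambda>p. v (snd p)) (\<lambda>p. 0) (\<lambda>p. v' (snd p))"
proof -
  have sub: "snd ` Tri \<subseteq> {0..1}" by (auto simp: Tri_def)
  have D: "((\<lambda>p. v (snd p)) has_derivative (\<lambda>(h, k). 0 * h + v' (snd p) * k)) (at p within Tri)"
    if p: "p \<in> Tri" for p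
  proof -
    have d': "\<And>y. y \<in> {0..1} \<Longrightarrow> (v has_derivative (\<lambda>h. v' y * h)) (at y within {0..1})"
      using d by (simp add: has_field_derivative_def)
    have "((\<lambda>p. v (snd p)) has_derivative (\<lambda>y. v' (snd p) * (snd y))) (at p within Tri)"
      by (rule has_derivative_in_compose2[OF d' sub p has_derivative_snd[OF has_derivative_ident]])
    then show ?thesis by (rule has_derivative_eq_rhs) (auto simp: fun_eq_iff)
  qed
  have "continuous_on Tri (\<lambda>p. v' (snd p))"
    by (rule continuous_on_compose2[OF c]) (use sub in \<open>auto intro!: continuous_intros\<close>)
  then show ?thesis using D unfolding C1_on_Tri_def by (auto intro!: continuous_intros)
qed

lemma cont_on_Tri_comp:
  assumes "continuous_on Tri F" "continuous_on S p" "\<And>s. s \<in> S \<Longrightarrow> p s \<in> Tri"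
  shows "continuous_on S (\<lambda>s. F (p s))"
  by (rule continuous_on_compose2[OF assms(1,2)]) (use assms(3) in auto)

lemma VL:
  assumes C: "C1_on_Tri F Fx Fy" and x: "x \<in> {0..1}"
  shows "((\<lambda>x. integral {0..x} (\<lambda>y. F (x, y))) has_real_derivative
           (F (x, x) + integral {0..x} (\<lambda>y. Fx (x, y)))) (at x within {0..1})"
proof -
  have cF: "continuous_on Tri F" using C by (rule C1_cont)
  have cFx: "continuous_on Tri Fx" and cFy: "continuous_on Tri Fy"
    using C by (auto simp: C1_on_Tri_def)
  define G where "G x s = x * F (x, x * s)" for x s :: real
  define Gx where "Gx x s = F (x, x * s) + x * (Fx (x, x * s) + s * Fy (x, x * s))" for x s :: real
  have mem: "(x, x * s) \<in> Tri" if "x \<in> {0..1}" "s \<in> {0..1}" for x s :: real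
    using that by (auto intro: mult_left_le mult_le_one)
  have dG: "((\<lambda>x. G x s) has_real_derivative Gx x s) (at x within {0..1})"
    if "x \<in> {0..1}" "s \<in> {0..1}" for x s
  proof -
    have "((\<lambda>x. F (0 + x * 1, 0 + x * s)) has_real_derivative
        (Fx (0 + x * 1, 0 + x * s) * 1 + Fy (0 + x * 1, 0 + x * s) * s)) (at x within {0..1})"
      by (rule C1_line[OF C that(1)]) (use mem that in auto)
    then have "((\<lambda>x. F (x, x * s)) has_real_derivative
        (Fx (x, x * s) + Fy (x, x * s) * s)) (at x within {0..1})" by simp
    then show ?thesis unfolding G_def Gx_def
      by (auto intro!: derivative_eq_intros simp: algebra_simps)
  qed
  have cGx: "continuous_on ({0..1} \<times> cbox 0 1) (\<lambda>(x, s). Gx x s)"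
  proof -
    have m: "\<And>p. p \<in> {0..1::real} \<times> {0..1::real} \<Longrightarrow> (fst p, fst p * snd p) \<in> Tri"
      using mem by auto
    have "continuous_on ({0..1} \<times> {0..1}) (\<lambda>p. F (fst p, fst p * snd p))"
      by (rule cont_on_Tri_comp[OF cF _ m]) (intro continuous_intros)
    moreover have "continuous_on ({0..1} \<times> {0..1}) (\<lambda>p. Fx (fst p, fst p * snd p))"
      by (rule cont_on_Tri_comp[OF cFx _ m]) (intro continuous_intros)
    moreover have "continuous_on ({0..1} \<times> {0..1}) (\<lambda>p. Fy (fst p, fst p * snd p))"
      by (rule cont_on_Tri_comp[OF cFy _ m]) (intro continuous_intros)
    ultimately show ?thesis unfolding Gx_def by (auto simp: split_beta intro!: continuous_intros)
  qed
  have intG: "G x integrable_on cbox 0 1" if "x \<in> {0..1}" for x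
  proof -
    have "continuous_on {0..1} (\<lambda>s. F (x, x * s))"
      by (rule cont_on_Tri_comp[OF cF]) (use mem that in \<open>auto intro!: continuous_intros\<close>)
    then show ?thesis unfolding G_def by (auto intro!: integrable_continuous_real continuous_intros)
  qed
  have L: "((\<lambda>x. integral (cbox 0 1) (G x)) has_real_derivative integral (cbox 0 1) (Gx x)) (at x within {0..1})"
    by (rule leibniz_rule_field_derivative[OF dG intG cGx x]) auto
  have eq1: "integral {0..x'} (\<lambda>y. F (x', y)) = integral (cbox 0 1) (G x')" if "x' \<in> {0..1}" for x'
    using integral_scale01[of x' "\<lambda>y. F (x', y)"] that unfolding G_def by simp
  have L2: "((\<lambda>x. integral {0..x} (\<lambda>y. F (x, y))) has_real_derivative integral (cbox 0 1) (Gx x)) (at x within {0..1})"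
    by (rule has_field_derivative_transform_within[OF L zero_less_one x]) (simp add: eq1)
  have c1: "continuous_on {0..1} (\<lambda>s. F (x, x * s) + x * s * Fy (x, x * s))"
    and c2: "continuous_on {0..1} (\<lambda>s. Fx (x, x * s))"
    by (rule cont_on_Tri_comp[OF cF] cont_on_Tri_comp[OF cFy] cont_on_Tri_comp[OF cFx]
        continuous_intros | use mem x in auto)+
  have ftc: "((\<lambda>s. F (x, x * s) + x * s * Fy (x, x * s)) has_integral (1 * F (x, x * 1) - 0 * F (x, x*0))) {0..1}"
  proof (rule fundamental_theorem_of_calculus)
    fix s :: real assume s: "s \<in> {0..1}"
    have "((\<lambda>s. F (x + s * 0, 0 + s * x)) has_real_derivative
        (Fx (x + s * 0, 0 + s * x) * 0 + Fy (x + s * 0, 0 + s * x) * x)) (at s within {0..1})"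
      by (rule C1_line[OF C s]) (use x in \<open>auto intro: mult_left_le_one_le\<close>)
    then have "((\<lambda>s. F (x, x * s)) has_real_derivative (Fy (x, x * s) * x)) (at s within {0..1})"
      by (simp add: mult.commute)
    then show "((\<lambda>s. s * F (x, x * s)) has_vector_derivative
        (F (x, x * s) + x * s * Fy (x, x * s))) (at s within {0..1})"
      unfolding has_real_derivative_iff_has_vector_derivative[symmetric]
      by (auto intro!: derivative_eq_intros simp: algebra_simps)
  qed simp
  have "integral (cbox 0 1) (Gx x) = integral {0..1} (\<lambda>s. F (x, x * s) + x * s * Fy (x, x * s))
        + x * integral {0..1} (\<lambda>s. Fx (x, x * s))"
  proof -
    have i1: "(\<lambda>s. F (x, x * s) + x * s * Fy (x, x * s)) integrable_on {0..1}"
      using c1 by (rule integrable_continuous_real)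
    have i2: "(\<lambda>s. x * Fx (x, x * s)) integrable_on {0..1}"
      using c2 by (intro integrable_continuous_real continuous_intros)
    have "integral (cbox 0 1) (Gx x) = integral {0..1} (\<lambda>s. (F (x, x * s) + x * s * Fy (x, x * s)) + x * Fx (x, x * s))"
      unfolding cbox_interval by (rule integral_cong) (simp add: Gx_def algebra_simps)
    also have "\<dots> = integral {0..1} (\<lambda>s. F (x, x * s) + x * s * Fy (x, x * s)) + integral {0..1} (\<lambda>s. x * Fx (x, x * s))"
      by (rule integral_add[OF i1 i2])
    finally show ?thesis by simp
  qed
  also have "\<dots> = F (x, x) + integral {0..x} (\<lambda>y. Fx (x, y))"
    using ftc integral_scale01[of x "\<lambda>y. Fx (x, y)"] x by (simp add: integral_unique)
  finally show ?thesis using L2 by simp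
qed

lemma int_bound:
  fixes f g :: "real \<Rightarrow> real"
  assumes gi: "g integrable_on S" and b: "\<And>x. x \<in> S \<Longrightarrow> \<bar>f x\<bar> \<le> g x"
  shows "\<bar>integral S f\<bar> \<le> integral S g"
proof (cases "f integrable_on S")
  case True
  then show ?thesis using integral_norm_bound_integral[OF True gi] b by auto
next
  case False
  then have "integral S f = 0" by (simp add: not_integrable_integral)
  moreover have "0 \<le> integral S g"
    by (rule integral_nonneg[OF gi]) (use b in \<open>force\<close>)
  ultimately show ?thesis by simp
qed

lemma exp_neg_integral:
  fixes l a :: real
  assumes l: "l > 0" and a: "0 \<le> a"
  shows "((\<lambda>x. exp (- l * x)) has_integral ((1 - exp (- l * a)) / l)) {0..a}"
proof -
  have "((\<lambda>x. exp (- l * x)) has_integral ((- exp (- l * a) / l) - (- exp (- l * 0) / l))) {0..a}"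
    by (rule fundamental_theorem_of_calculus[OF a])
       (use l in \<open>auto intro!: derivative_eq_intros simp: has_real_derivative_iff_has_vector_derivative[symmetric]\<close>)
  then show ?thesis by (simp add: diff_divide_distrib)
qed

lemma exp_pos_integral:
  fixes l a :: real
  assumes l: "l > 0" and a: "0 \<le> a"
  shows "((\<lambda>x. exp (l * x)) has_integral ((exp (l * a) - 1) / l)) {0..a}"
proof -
  have "((\<lambda>x. exp (l * x)) has_integral ((exp (l * a) / l) - (exp (l * 0) / l))) {0..a}"
    by (rule fundamental_theorem_of_calculus[OF a])
       (use l in \<open>auto intro!: derivative_eq_intros simp: has_real_derivative_iff_has_vector_derivative[symmetric]\<close>)
  then show ?thesis by (simp add: diff_divide_distrib)
qed

definition lam :: "real \<Rightarrow> real \<Rightarrow> real" where "lam Bg Bf = 4 * (Bg + Bf + 1)"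
definition Kb :: "real \<Rightarrow> real \<Rightarrow> real" where "Kb Bg Bf = 2 * (Bg + Bf) * exp (2 * lam Bg Bf)"

lemma kernel_bound:
  assumes Bg: "Bg \<ge> 0" and Bf: "Bf \<ge> 0"
    and gb: "\<And>x. x \<in> {0..1} \<Longrightarrow> \<bar>g x\<bar> \<le> Bg"
    and fb: "\<And>p. p \<in> Tri \<Longrightarrow> \<bar>f p\<bar> \<le> Bf"
    and KE: "kernel_equation g f k" and kc: "continuous_on Tri k"
  shows "\<And>p. p \<in> Tri \<Longrightarrow> \<bar>k p\<bar> \<le> Kb Bg Bf"
proof -
  define l where "l = lam Bg Bf"
  have l0: "l > 0" and l1: "l \<ge> 1" and lg: "Bg / l \<le> 1/4" and lf: "Bf / l^2 \<le> 1/4"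
  proof -
    show "l > 0" "l \<ge> 1" using Bg Bf by (auto simp: l_def lam_def)
    show "Bg / l \<le> 1/4" using Bg Bf by (auto simp: l_def lam_def field_simps)
    have "Bf \<le> l" using Bg Bf by (auto simp: l_def lam_def)
    also have "l \<le> l^2" using \<open>l \<ge> 1\<close> by (simp add: power2_eq_square)
    finally have "Bf \<le> l^2" .
    have "4 * Bf \<le> l" using Bg Bf by (auto simp: l_def lam_def)
    also have "l \<le> l^2" using \<open>l \<ge> 1\<close> by (simp add: power2_eq_square)
    finally show "Bf / l^2 \<le> 1/4" using \<open>l \<ge> 1\<close> by (simp add: field_simps)
  qed
  define \<rho> where "\<rho> p = exp (- l * (2 * fst p - snd p)) * \<bar>k p\<bar>" for p :: "real \<times> real"
  have "continuous_on Tri \<rho>" unfolding \<rho>_def using kc by (intro continuous_intros)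
  moreover have "Tri \<noteq> {}" using Tri_mem[of 0 0] by force
  ultimately obtain p0 where p0: "p0 \<in> Tri" and mx: "\<And>p. p \<in> Tri \<Longrightarrow> \<rho> p \<le> \<rho> p0"
    using continuous_attains_sup[OF compact_Tri] by metis
  define N where "N = \<rho> p0"
  have N0: "N \<ge> 0" by (simp add: N_def \<rho>_def)
  have kN: "\<bar>k (a, b)\<bar> \<le> N * exp (l * (2 * a - b))" if "(a, b) \<in> Tri" for a b
  proof -
    have "exp (- l * (2 * a - b)) * \<bar>k (a, b)\<bar> \<le> N" using mx[OF that] by (simp add: N_def \<rho>_def)
    then have "exp (l * (2 * a - b)) * (exp (- l * (2 * a - b)) * \<bar>k (a, b)\<bar>) \<le> exp (l * (2 * a - b)) * N"
      by (simp add: mult_left_mono)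
    moreover have "exp (l * (2 * a - b)) * (exp (- l * (2 * a - b)) * \<bar>k (a, b)\<bar>) = \<bar>k (a, b)\<bar>"
      by (simp add: mult.assoc[symmetric] mult_exp_exp)
    ultimately have "\<bar>k (a, b)\<bar> \<le> exp (l * (2 * a - b)) * N" by linarith
    then show ?thesis by (simp add: mult.commute)
  qed
  obtain x y where xy: "p0 = (x, y)" by (cases p0)
  have T: "0 \<le> y" "y \<le> x" "x \<le> 1" using p0 xy by auto
  define s where "s = x - y"
  have s: "0 \<le> s" "s \<le> 1" "s + y \<le> 1" using T by (auto simp: s_def)
  have eq: "k (x, y) = - g s - integral {0..y} (\<lambda>\<xi>. f (s + \<xi>, \<xi>))
                   + integral {0..s} (\<lambda>\<xi>. g \<xi> * k (s, \<xi>))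
                   + integral {0..y} (\<lambda>\<eta>. integral {0..s}
                        (\<lambda>\<xi>. f (\<xi> + \<eta>, \<eta>) * k (s + \<eta>, \<xi> + \<eta>)))"
    using KE p0 xy unfolding kernel_equation_def s_def by fastforce
  define E where "E = exp (l * (2 * s + y))"
  have E1: "E \<ge> 1" using l0 s T by (auto simp: E_def)
  have b1: "\<bar>g s\<bar> \<le> Bg" using gb s by auto
  have b2: "\<bar>integral {0..y} (\<lambda>\<xi>. f (s + \<xi>, \<xi>))\<bar> \<le> Bf"
  proof -
    have "\<bar>integral {0..y} (\<lambda>\<xi>. f (s + \<xi>, \<xi>))\<bar> \<le> integral {0..y} (\<lambda>\<xi>. Bf)"
      by (rule int_bound) (use fb s T in auto)
    also have "\<dots> = Bf * y" using T by simp
    also have "\<dots> \<le> Bf" using T s Bf by (simp add: mult_left_le)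
    finally show ?thesis .
  qed
  have b3: "\<bar>integral {0..s} (\<lambda>\<xi>. g \<xi> * k (s, \<xi>))\<bar> \<le> Bg * N * exp (2 * l * s) / l"
  proof -
    have hi: "((\<lambda>\<xi>. Bg * N * exp (2 * l * s) * exp (- l * \<xi>)) has_integral
        (Bg * N * exp (2 * l * s) * ((1 - exp (- l * s)) / l))) {0..s}"
      by (rule has_integral_mult_right[OF exp_neg_integral[OF l0 s(1)]])
    have "\<bar>integral {0..s} (\<lambda>\<xi>. g \<xi> * k (s, \<xi>))\<bar> \<le> integral {0..s} (\<lambda>\<xi>. Bg * N * exp (2 * l * s) * exp (- l * \<xi>))"
    proof (rule int_bound)
      show "(\<lambda>\<xi>. Bg * N * exp (2 * l * s) * exp (- l * \<xi>)) integrable_on {0..s}" using hi by blast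
      fix \<xi> assume \<xi>: "\<xi> \<in> {0..s}"
      have "\<bar>g \<xi> * k (s, \<xi>)\<bar> = \<bar>g \<xi>\<bar> * \<bar>k (s, \<xi>)\<bar>" by (simp add: abs_mult)
      also have "\<dots> \<le> Bg * (N * exp (l * (2 * s - \<xi>)))"
        by (rule mult_mono) (use gb[of \<xi>] kN[of s \<xi>] \<xi> s Bg in auto)
      also have "\<dots> = Bg * N * exp (2 * l * s) * exp (- l * \<xi>)"
        by (simp add: mult_exp_exp algebra_simps)
      finally show "\<bar>g \<xi> * k (s, \<xi>)\<bar> \<le> Bg * N * exp (2 * l * s) * exp (- l * \<xi>)" .
    qed
    also have "\<dots> = Bg * N * exp (2 * l * s) * ((1 - exp (- l * s)) / l)" using hi by (rule integral_unique)
    also have "\<dots> \<le> Bg * N * exp (2 * l * s) / l"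
      using Bg N0 l0 by (simp add: field_simps mult_nonneg_nonneg)
    finally show ?thesis .
  qed
  have b4: "\<bar>integral {0..y} (\<lambda>\<eta>. integral {0..s}
                        (\<lambda>\<xi>. f (\<xi> + \<eta>, \<eta>) * k (s + \<eta>, \<xi> + \<eta>)))\<bar> \<le> Bf * N * E / l^2"
  proof -
    define C where "C = Bf * N * exp (2 * l * s) / l"
    have C0: "C \<ge> 0" using Bf N0 l0 by (simp add: C_def)
    have hi: "((\<lambda>\<eta>. C * exp (l * \<eta>)) has_integral (C * ((exp (l * y) - 1) / l))) {0..y}"
      by (rule has_integral_mult_right[OF exp_pos_integral[OF l0 T(1)]])
    have "\<bar>integral {0..y} (\<lambda>\<eta>. integral {0..s}
                        (\<lambda>\<xi>. f (\<xi> + \<eta>, \<eta>) * k (s + \<eta>, \<xi> + \<eta>)))\<bar> \<le> integral {0..y} (\<lambda>\<eta>. C * exp (l * \<eta>))"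
    proof (rule int_bound)
      show "(\<lambda>\<eta>. C * exp (l * \<eta>)) integrable_on {0..y}" using hi by blast
      fix \<eta> assume \<eta>: "\<eta> \<in> {0..y}"
      have hi2: "((\<lambda>\<xi>. Bf * N * exp (l * (2 * s + \<eta>)) * exp (- l * \<xi>)) has_integral
        (Bf * N * exp (l * (2 * s + \<eta>)) * ((1 - exp (- l * s)) / l))) {0..s}"
        by (rule has_integral_mult_right[OF exp_neg_integral[OF l0 s(1)]])
      have "\<bar>integral {0..s} (\<lambda>\<xi>. f (\<xi> + \<eta>, \<eta>) * k (s + \<eta>, \<xi> + \<eta>))\<bar>
           \<le> integral {0..s} (\<lambda>\<xi>. Bf * N * exp (l * (2 * s + \<eta>)) * exp (- l * \<xi>))"
      proof (rule int_bound)
        show "(\<lambda>\<xi>. Bf * N * exp (l * (2 * s + \<eta>)) * exp (- l * \<xi>)) integrable_on {0..s}"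
          using hi2 by blast
        fix \<xi> assume \<xi>: "\<xi> \<in> {0..s}"
        have m1: "(\<xi> + \<eta>, \<eta>) \<in> Tri" and m2: "(s + \<eta>, \<xi> + \<eta>) \<in> Tri" using \<xi> \<eta> s T by auto
        have "\<bar>f (\<xi> + \<eta>, \<eta>) * k (s + \<eta>, \<xi> + \<eta>)\<bar> = \<bar>f (\<xi> + \<eta>, \<eta>)\<bar> * \<bar>k (s + \<eta>, \<xi> + \<eta>)\<bar>"
          by (simp add: abs_mult)
        also have "\<dots> \<le> Bf * (N * exp (l * (2 * (s + \<eta>) - (\<xi> + \<eta>))))"
          by (rule mult_mono) (use fb[OF m1] kN[OF m2] Bf in auto)
        also have "\<dots> = Bf * N * exp (l * (2 * s + \<eta>)) * exp (- l * \<xi>)"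
          by (simp add: mult_exp_exp algebra_simps)
        finally show "\<bar>f (\<xi> + \<eta>, \<eta>) * k (s + \<eta>, \<xi> + \<eta>)\<bar> \<le> Bf * N * exp (l * (2 * s + \<eta>)) * exp (- l * \<xi>)" .
      qed
      also have "\<dots> = Bf * N * exp (l * (2 * s + \<eta>)) * ((1 - exp (- l * s)) / l)"
        using hi2 by (rule integral_unique)
      also have "\<dots> \<le> Bf * N * exp (l * (2 * s + \<eta>)) / l"
        using Bf N0 l0 by (simp add: field_simps mult_nonneg_nonneg)
      also have "\<dots> = C * exp (l * \<eta>)"
        by (simp add: C_def mult_exp_exp algebra_simps)
      finally show "\<bar>integral {0..s} (\<lambda>\<xi>. f (\<xi> + \<eta>, \<eta>) * k (s + \<eta>, \<xi> + \<eta>))\<bar> \<le> C * exp (l * \<eta>)" .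
    qed
    also have "\<dots> = C * ((exp (l * y) - 1) / l)" using hi by (rule integral_unique)
    also have "\<dots> \<le> C * exp (l * y) / l"
      using C0 l0 by (simp add: field_simps)
    also have "\<dots> = Bf * N * E / l^2"
      by (simp add: C_def E_def mult_exp_exp algebra_simps power2_eq_square)
    finally show ?thesis .
  qed
  have A: "2 * s + y = 2 * x - y" by (simp add: s_def)
  have "N * E = (exp (- l * (2 * x - y)) * exp (l * (2 * x - y))) * \<bar>k (x, y)\<bar>"
    by (simp add: N_def \<rho>_def E_def A xy)
  also have "\<dots> = \<bar>k (x, y)\<bar>" by (simp add: mult_exp_exp)
  also have "\<dots> \<le> Bg + Bf + Bg * N * exp (2 * l * s) / l + Bf * N * E / l^2"
    unfolding eq using b1 b2 b3 b4 by linarith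
  also have "Bg * N * exp (2 * l * s) / l \<le> Bg * N * E / l"
    using Bg N0 l0 T by (auto simp: E_def intro!: divide_right_mono mult_left_mono)
  finally have "N * E \<le> Bg + Bf + (Bg / l + Bf / l^2) * (N * E)"
    by (simp add: algebra_simps)
  also have "(Bg / l + Bf / l^2) * (N * E) \<le> (1/2) * (N * E)"
    using lg lf N0 E1 by (intro mult_right_mono) (linarith, simp)
  finally have NE: "N * E \<le> 2 * (Bg + Bf)" by simp
  have N2: "N \<le> 2 * (Bg + Bf)"
  proof -
    have "N * 1 \<le> N * E" by (rule mult_left_mono[OF E1 N0])
    then show ?thesis using NE by simp
  qed
  fix p assume p: "p \<in> Tri"
  obtain a b where ab: "p = (a, b)" by (cases p)
  have "\<bar>k p\<bar> \<le> N * exp (l * (2 * a - b))" using kN p ab by auto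
  also have "\<dots> \<le> 2 * (Bg + Bf) * exp (2 * l)"
    using N2 N0 p ab l0 by (intro mult_mono) auto
  finally show "\<bar>k p\<bar> \<le> Kb Bg Bf" by (simp add: Kb_def l_def)
qed

lemma integral_shift_real: "integral {0..b - a} (\<lambda>\<xi>. h (\<xi> + a)) = integral {a..b::real} h"
  using integral_shift_Icc_real[of 0 "b - a" h a] by (simp add: o_def add.commute)

lemma kernel_bc:
  assumes KE: "kernel_equation g f k" and x: "x \<in> {0..1}"
  shows "k (x, 0) = - g x + integral {0..x} (\<lambda>\<xi>. g \<xi> * k (x, \<xi>))"
proof -
  have "(x, 0) \<in> Tri" using x by simp
  from bspec[OF KE[unfolded kernel_equation_def] this] show ?thesis by simp
qed

lemma kernel_pde:
  assumes KE: "kernel_equation g f k" and Ck: "C1_on_Tri k kx ky" and Cf: "C1_on_Tri f fx fy"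
    and xz: "(x, z) \<in> Tri" and x1: "x < 1"
  shows "kx (x, z) + ky (x, z) = - f (x, z) + integral {z..x} (\<lambda>y. f (y, z) * k (x, y))"
proof -
  define s where "s = x - z"
  have s: "0 \<le> s" "s < 1" "z \<le> 1 - s" "0 \<le> z" using xz x1 by (auto simp: s_def)
  have cf: "continuous_on Tri f" using Cf by (rule C1_cont)
  have ck: "continuous_on Tri k" using Ck by (rule C1_cont)
  define I where "I \<eta> = integral {0..s} (\<lambda>\<xi>. f (\<xi> + \<eta>, \<eta>) * k (s + \<eta>, \<xi> + \<eta>))" for \<eta>
  define C where "C = - g s + integral {0..s} (\<lambda>\<xi>. g \<xi> * k (s, \<xi>))"
  define J where "J = {0..1 - s}"
  have memJ: "(\<xi> + \<eta>, \<eta>) \<in> Tri" "(s + \<eta>, \<xi> + \<eta>) \<in> Tri" if "\<eta> \<in> J" "\<xi> \<in> {0..s}" for \<eta> \<xi>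
    using that s by (auto simp: J_def)
  have cI: "continuous_on J I"
    unfolding I_def cbox_interval[symmetric]
  proof (rule integral_continuous_on_param)
    have m1: "\<And>p. p \<in> J \<times> cbox 0 s \<Longrightarrow> (snd p + fst p, fst p) \<in> Tri"
      and m2: "\<And>p. p \<in> J \<times> cbox 0 s \<Longrightarrow> (s + fst p, snd p + fst p) \<in> Tri"
      using memJ by auto
    have "continuous_on (J \<times> cbox 0 s) (\<lambda>p. f (snd p + fst p, fst p))"
      by (rule cont_on_Tri_comp[OF cf _ m1]) (intro continuous_intros)
    moreover have "continuous_on (J \<times> cbox 0 s) (\<lambda>p. k (s + fst p, snd p + fst p))"
      by (rule cont_on_Tri_comp[OF ck _ m2]) (intro continuous_intros)
    ultimately show "continuous_on (J \<times> cbox 0 s) (\<lambda>(\<eta>, \<xi>). f (\<xi> + \<eta>, \<eta>) * k (s + \<eta>, \<xi> + \<eta>))"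
      by (auto simp: split_beta intro!: continuous_intros)
  qed
  have cF: "continuous_on J (\<lambda>\<eta>. f (s + \<eta>, \<eta>))"
    by (rule cont_on_Tri_comp[OF cf]) (use s in \<open>auto simp: J_def intro!: continuous_intros\<close>)
  have rep: "k (s + y, y) = C + integral {0..y} (\<lambda>\<eta>. I \<eta> - f (s + \<eta>, \<eta>))" if y: "y \<in> J" for y
  proof -
    have sub: "{0..y} \<subseteq> J" using y by (auto simp: J_def)
    have i1: "I integrable_on {0..y}"
      by (rule integrable_continuous_real) (rule continuous_on_subset[OF cI sub])
    have i2: "(\<lambda>\<eta>. f (s + \<eta>, \<eta>)) integrable_on {0..y}"
      by (rule integrable_continuous_real) (rule continuous_on_subset[OF cF sub])
    have "(s + y, y) \<in> Tri" using y s by (auto simp: J_def)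
    then have "k (s + y, y) = - g s - integral {0..y} (\<lambda>\<xi>. f (s + \<xi>, \<xi>))
                   + integral {0..s} (\<lambda>\<xi>. g \<xi> * k (s, \<xi>)) + integral {0..y} I"
      using KE unfolding kernel_equation_def I_def by fastforce
    then show ?thesis
      by (simp add: C_def integral_diff[OF i1 i2])
  qed
  have z: "z \<in> J" using s by (simp add: J_def)
  have D1: "((\<lambda>y. C + integral {0..y} (\<lambda>\<eta>. I \<eta> - f (s + \<eta>, \<eta>))) has_real_derivative
       (I z - f (s + z, z))) (at z within J)"
  proof -
    have "((\<lambda>y. integral {0..y} (\<lambda>\<eta>. I \<eta> - f (s + \<eta>, \<eta>))) has_real_derivative
       (I z - f (s + z, z))) (at z within {0..1 - s})"
      by (rule integral_has_real_derivative) (use cI cF z in \<open>auto simp: J_def intro!: continuous_on_diff\<close>)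
    then show ?thesis unfolding J_def by (auto intro!: derivative_eq_intros)
  qed
  have D2': "((\<lambda>y. k (s + y * 1, 0 + y * 1)) has_real_derivative
       (kx (s + z * 1, 0 + z * 1) * 1 + ky (s + z * 1, 0 + z * 1) * 1)) (at z within J)"
    by (rule C1_line[OF Ck z]) (use s in \<open>auto simp: J_def\<close>)
  have D2: "((\<lambda>y. C + integral {0..y} (\<lambda>\<eta>. I \<eta> - f (s + \<eta>, \<eta>))) has_real_derivative
       (kx (s + z, z) + ky (s + z, z))) (at z within J)"
  proof -
    from D2' have D: "((\<lambda>y. k (s + y, y)) has_real_derivative (kx (s + z, z) + ky (s + z, z))) (at z within J)"
      by simp
    show ?thesis
      by (rule has_field_derivative_transform_within[OF D zero_less_one z]) (use rep in auto)
  qed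
  have "kx (s + z, z) + ky (s + z, z) = I z - f (s + z, z)"
    using vector_derivative_unique_within_closed_interval[of 0 "1 - s" z]
      D1 D2 s z unfolding J_def has_real_derivative_iff_has_vector_derivative
    by auto
  moreover have "s + z = x" by (simp add: s_def)
  moreover have "I z = integral {z..x} (\<lambda>y. f (y, z) * k (x, y))"
    unfolding I_def using integral_shift_real[where h="\<lambda>y. f (y, z) * k (x, y)" and a=z and b=x]
    by (simp add: s_def algebra_simps)
  ultimately show ?thesis by simp
qed

lemma lint_interval:
  fixes h :: "real \<Rightarrow> real"
  assumes "continuous_on {c..d} h"
  shows "(\<integral>z. indicator {c..d} z * h z \<partial>lborel) = integral {c..d} h"
proof -
  have "set_integrable lborel {c..d} h"
    unfolding set_integrable_def using borel_integrable_compact[OF compact_Icc assms] by simp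
  from set_borel_integral_eq_integral(2)[OF this] show ?thesis
    by (simp add: set_lebesgue_integral_def)
qed

lemma tri_fubini:
  fixes H :: "real \<times> real \<Rightarrow> real"
  assumes cH: "continuous_on {(y, z). 0 \<le> z \<and> z \<le> y \<and> y \<le> a} H"
  shows "integral {0..a} (\<lambda>y. integral {0..y} (\<lambda>z. H (y, z)))
       = integral {0..a} (\<lambda>z. integral {z..a} (\<lambda>y. H (y, z)))"
proof -
  define T where "T = {(y, z). 0 \<le> z \<and> z \<le> y \<and> y \<le> (a::real)}"
  define T' where "T' = {(z, y). 0 \<le> z \<and> z \<le> y \<and> y \<le> (a::real)}"
  have cT: "compact T"
  proof -
    have "T = cbox (0, 0) (a, a) \<inter> {p. snd p \<le> fst p}"
      by (auto simp: T_def cbox_Pair_iff)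
    moreover have "closed {p::real\<times>real. snd p \<le> fst p}"
      by (intro closed_Collect_le continuous_intros)
    ultimately show ?thesis by (metis compact_Int_closed compact_cbox)
  qed
  have cT': "compact T'"
  proof -
    have "T' = cbox (0, 0) (a, a) \<inter> {p. fst p \<le> snd p}"
      by (auto simp: T'_def cbox_Pair_iff)
    moreover have "closed {p::real\<times>real. fst p \<le> snd p}"
      by (intro closed_Collect_le continuous_intros)
    ultimately show ?thesis by (metis compact_Int_closed compact_cbox)
  qed
  have cH': "continuous_on T' (\<lambda>p. H (snd p, fst p))"
    by (rule continuous_on_compose2[OF cH]) (auto simp: T'_def intro!: continuous_intros)
  define Hc where "Hc p = indicator T p * H p" for p
  have i1: "integrable lborel Hc"
    unfolding Hc_def using borel_integrable_compact[OF cT cH[folded T_def]] by simp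
  have i2: "integrable lborel (\<lambda>p. Hc (snd p, fst p))"
  proof -
    have "(\<lambda>p. Hc (snd p, fst p)) = (\<lambda>p. indicator T' p *\<^sub>R H (snd p, fst p))"
      by (auto simp: Hc_def T_def T'_def fun_eq_iff split: split_indicator)
    then show ?thesis using borel_integrable_compact[OF cT' cH'] by simp
  qed
  have I1: "integrable (lborel \<Otimes>\<^sub>M lborel) Hc" using i1 by (simp add: lborel_prod)
  have I2: "integrable (lborel \<Otimes>\<^sub>M lborel) (\<lambda>p. Hc (snd p, fst p))" using i2 by (simp add: lborel_prod)
  have F: "(\<integral>z. (\<integral>y. Hc (y, z) \<partial>lborel) \<partial>lborel) = (\<integral>y. (\<integral>z. Hc (y, z) \<partial>lborel) \<partial>lborel)"
    using lborel_pair.Fubini_integral[of "\<lambda>y z. Hc (y, z)"] I1 by simp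
  have in1: "(\<integral>z. Hc (y, z) \<partial>lborel) = indicator {0..a} y * integral {0..y} (\<lambda>z. H (y, z))" for y
  proof (cases "y \<in> {0..a}")
    case True
    have "(\<lambda>z. Hc (y, z)) = (\<lambda>z. indicator {0..y} z * H (y, z))"
      using True by (auto simp: Hc_def T_def fun_eq_iff split: split_indicator)
    moreover have "continuous_on {0..y} (\<lambda>z. H (y, z))"
      by (rule continuous_on_compose2[OF cH]) (use True in \<open>auto intro!: continuous_intros\<close>)
    ultimately show ?thesis using True lint_interval by simp
  next
    case False
    then have "(\<lambda>z. Hc (y, z)) = (\<lambda>z. 0)"
      by (auto simp: Hc_def T_def fun_eq_iff split: split_indicator)
    then show ?thesis using False by simp
  qed
  have in2: "(\<integral>y. Hc (y, z) \<partial>lborel) = indicator {0..a} z * integral {z..a} (\<lambda>y. H (y, z))" for z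
  proof (cases "z \<in> {0..a}")
    case True
    have "(\<lambda>y. Hc (y, z)) = (\<lambda>y. indicator {z..a} y * H (y, z))"
      using True by (auto simp: Hc_def T_def fun_eq_iff split: split_indicator)
    moreover have "continuous_on {z..a} (\<lambda>y. H (y, z))"
      by (rule continuous_on_compose2[OF cH]) (use True in \<open>auto intro!: continuous_intros\<close>)
    ultimately show ?thesis using True lint_interval by simp
  next
    case False
    then have "(\<lambda>y. Hc (y, z)) = (\<lambda>y. 0)"
      by (auto simp: Hc_def T_def fun_eq_iff split: split_indicator)
    then show ?thesis using False by simp
  qed
  have j1: "integrable lborel (\<lambda>y. indicator {0..a} y * integral {0..y} (\<lambda>z. H (y, z)))"
    using lborel_pair.integrable_fst'[OF I1] by (simp add: in1)
  have j2: "integrable lborel (\<lambda>z. indicator {0..a} z * integral {z..a} (\<lambda>y. H (y, z)))"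
    using lborel_pair.integrable_fst'[OF I2] by (simp add: in2)
  have "integral {0..a} (\<lambda>y. integral {0..y} (\<lambda>z. H (y, z))) = (\<integral>y. (\<integral>z. Hc (y, z) \<partial>lborel) \<partial>lborel)"
    using set_borel_integral_eq_integral(2)[of "{0..a}" "\<lambda>y. integral {0..y} (\<lambda>z. H (y, z))"] j1
    by (simp add: in1 set_integrable_def set_lebesgue_integral_def)
  also have "\<dots> = (\<integral>z. (\<integral>y. Hc (y, z) \<partial>lborel) \<partial>lborel)" using F by simp
  also have "\<dots> = integral {0..a} (\<lambda>z. integral {z..a} (\<lambda>y. H (y, z)))"
    using set_borel_integral_eq_integral(2)[of "{0..a}" "\<lambda>z. integral {z..a} (\<lambda>y. H (y, z))"] j2
    by (simp add: in2 set_integrable_def set_lebesgue_integral_def)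
  finally show ?thesis .
qed

lemma cont_slice_y:
  assumes "continuous_on Tri F" "x \<le> 1"
  shows "continuous_on {0..x} (\<lambda>y. F (x, y))"
  by (rule cont_on_Tri_comp[OF assms(1)]) (use assms(2) in \<open>auto intro!: continuous_intros\<close>)

lemma transform_identity:
  assumes KE: "kernel_equation g f k" and Ck: "C1_on_Tri k kx ky" and Cf: "C1_on_Tri f fx fy"
    and cg: "continuous_on {0..1} g"
    and dv: "\<And>y. y \<in> {0..1} \<Longrightarrow> (v has_real_derivative v' y) (at y within {0..1})"
    and cv': "continuous_on {0..1} v'"
    and vt: "\<And>y. y \<in> {0..<1} \<Longrightarrow> vt y = v' y + g y * v 0 + integral {0..y} (\<lambda>z. f (y, z) * v z)"
    and x: "x \<in> {0..<1}"
  shows "vt x - integral {0..x} (\<lambda>y. k (x, y) * vt y)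
       = v' x - k (x, x) * v x - integral {0..x} (\<lambda>y. kx (x, y) * v y)"
proof -
  have x0: "0 \<le> x" and x1: "x < 1" using x by auto
  have sub: "{0..x} \<subseteq> {0..1}" using x by auto
  have ck: "continuous_on Tri k" using Ck by (rule C1_cont)
  have ckx: "continuous_on Tri kx" and cky: "continuous_on Tri ky" using Ck by (auto simp: C1_on_Tri_def)
  have cf: "continuous_on Tri f" using Cf by (rule C1_cont)
  have cv: "continuous_on {0..1} v"
    using dv by (meson DERIV_continuous continuous_on_eq_continuous_within)
  have Cv: "C1_on_Tri (\<lambda>p. v (snd p)) (\<lambda>p. 0) (\<lambda>p. v' (snd p))" by (rule C1_snd[OF dv cv'])
  define A where "A y = integral {0..y} (\<lambda>z. f (y, z) * v z)" for y
  have cA: "continuous_on {0..1} A"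
  proof -
    have C: "C1_on_Tri (\<lambda>p. f p * v (snd p)) (\<lambda>p. fx p * v (snd p) + f p * 0) (\<lambda>p. fy p * v (snd p) + f p * v' (snd p))"
      by (rule C1_mult[OF Cf Cv])
    have "A differentiable (at y within {0..1})" if "y \<in> {0..1}" for y
      using VL[OF C that] unfolding A_def by (auto simp: real_differentiable_def)
    then show ?thesis by (meson differentiable_imp_continuous_within continuous_on_eq_continuous_within)
  qed
  have ckx1: "continuous_on {0..x} (\<lambda>y. k (x, y))" by (rule cont_slice_y[OF ck]) (use x in auto)
  have ckx2: "continuous_on {0..x} (\<lambda>y. kx (x, y))" by (rule cont_slice_y[OF ckx]) (use x in auto)
  have ckx3: "continuous_on {0..x} (\<lambda>y. ky (x, y))" by (rule cont_slice_y[OF cky]) (use x in auto)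
  have cfx: "continuous_on {0..x} (\<lambda>y. f (x, y))" by (rule cont_slice_y[OF cf]) (use x in auto)
  have cv0: "continuous_on {0..x} v" "continuous_on {0..x} v'" "continuous_on {0..x} g" "continuous_on {0..x} A"
    using cv cv' cg cA sub by (auto intro: continuous_on_subset)
  note cc = ckx1 ckx2 ckx3 cfx cv0
  define Ia where "Ia = integral {0..x} (\<lambda>y. k (x, y) * v' y)"
  define Ib where "Ib = integral {0..x} (\<lambda>y. g y * k (x, y))"
  define Ic where "Ic = integral {0..x} (\<lambda>y. k (x, y) * A y)"
  define Id where "Id = integral {0..x} (\<lambda>y. ky (x, y) * v y)"
  define Ie where "Ie = integral {0..x} (\<lambda>y. kx (x, y) * v y)"
  have L0: "integral {0..x} (\<lambda>y. k (x, y) * vt y) = Ia + v 0 * Ib + Ic"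
  proof -
    have "integral {0..x} (\<lambda>y. k (x, y) * vt y)
        = integral {0..x} (\<lambda>y. (k (x, y) * v' y + v 0 * (g y * k (x, y))) + k (x, y) * A y)"
      by (rule integral_cong) (use vt x in \<open>auto simp: A_def algebra_simps\<close>)
    also have "\<dots> = integral {0..x} (\<lambda>y. k (x, y) * v' y + v 0 * (g y * k (x, y))) + Ic"
      unfolding Ic_def
      by (rule integral_add) (use cc in \<open>auto intro!: integrable_continuous_real continuous_intros\<close>)
    also have "integral {0..x} (\<lambda>y. k (x, y) * v' y + v 0 * (g y * k (x, y))) = Ia + v 0 * Ib"
      unfolding Ia_def Ib_def
      by (subst integral_add) (use cc in \<open>auto intro!: integrable_continuous_real continuous_intros\<close>)
    finally show ?thesis .
  qed
  have IBP: "Ia = k (x, x) * v x - k (x, 0) * v 0 - Id"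
  proof -
    have "((\<lambda>y. ky (x, y) * v y + k (x, y) * v' y) has_integral (k (x, x) * v x - k (x, 0) * v 0)) {0..x}"
    proof (rule fundamental_theorem_of_calculus[OF x0])
      fix y assume y: "y \<in> {0..x}"
      have d1: "((\<lambda>y. k (x + y * 0, 0 + y * 1)) has_real_derivative
          (kx (x + y * 0, 0 + y * 1) * 0 + ky (x + y * 0, 0 + y * 1) * 1)) (at y within {0..x})"
        by (rule C1_line[OF Ck y]) (use x in auto)
      have d2: "(v has_real_derivative v' y) (at y within {0..x})"
        by (rule has_field_derivative_subset[OF dv sub]) (use y sub in auto)
      show "((\<lambda>y. k (x, y) * v y) has_vector_derivative (ky (x, y) * v y + k (x, y) * v' y)) (at y within {0..x})"
        unfolding has_real_derivative_iff_has_vector_derivative[symmetric]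
        using d1 d2 by (auto intro!: derivative_eq_intros)
    qed
    then have "integral {0..x} (\<lambda>y. ky (x, y) * v y + k (x, y) * v' y) = k (x, x) * v x - k (x, 0) * v 0"
      by (rule integral_unique)
    moreover have "integral {0..x} (\<lambda>y. ky (x, y) * v y + k (x, y) * v' y) = Id + Ia"
      unfolding Id_def Ia_def
      by (rule integral_add) (use cc in \<open>auto intro!: integrable_continuous_real continuous_intros\<close>)
    ultimately show ?thesis by simp
  qed
  have K1: "k (x, 0) = - g x + Ib" unfolding Ib_def by (rule kernel_bc[OF KE]) (use x in auto)
  \<comment> \<open>Fubini and kernel PDE\<close>
  have Fub: "Ic = Ie + Id + A x"
  proof -
    have cH: "continuous_on {(y, z). 0 \<le> z \<and> z \<le> y \<and> y \<le> x} (\<lambda>p. k (x, fst p) * f p * v (snd p))"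
    proof -
      have "continuous_on {(y, z). 0 \<le> z \<and> z \<le> y \<and> y \<le> x} (\<lambda>p. k (x, fst p))"
        by (rule cont_on_Tri_comp[OF ck]) (use x in \<open>auto intro!: continuous_intros\<close>)
      moreover have "continuous_on {(y, z). 0 \<le> z \<and> z \<le> y \<and> y \<le> x} f"
        by (rule continuous_on_subset[OF cf]) (use x in auto)
      moreover have "continuous_on {(y, z). 0 \<le> z \<and> z \<le> y \<and> y \<le> x} (\<lambda>p. v (snd p))"
        by (rule continuous_on_compose2[OF cv]) (use x in \<open>auto intro!: continuous_intros\<close>)
      ultimately show ?thesis by (intro continuous_intros)
    qed
    have "Ic = integral {0..x} (\<lambda>y. integral {0..y} (\<lambda>z. k (x, y) * f (y, z) * v z))"
      unfolding Ic_def A_def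
      by (rule integral_cong) (simp only: integral_mult_right mult.assoc)
    also have "\<dots> = integral {0..x} (\<lambda>z. integral {z..x} (\<lambda>y. k (x, y) * f (y, z) * v z))"
      using tri_fubini[OF cH] by simp
    also have "\<dots> = integral {0..x} (\<lambda>z. kx (x, z) * v z + ky (x, z) * v z + f (x, z) * v z)"
    proof (rule integral_cong)
      fix z assume z: "z \<in> {0..x}"
      have "integral {z..x} (\<lambda>y. k (x, y) * f (y, z) * v z) = v z * integral {z..x} (\<lambda>y. f (y, z) * k (x, y))"
      proof -
        have "(\<lambda>y. k (x, y) * f (y, z) * v z) = (\<lambda>y. f (y, z) * k (x, y) * v z)"
          by (simp add: fun_eq_iff)
        then have "integral {z..x} (\<lambda>y. k (x, y) * f (y, z) * v z) = integral {z..x} (\<lambda>y. f (y, z) * k (x, y)) * v z"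
          by (simp only: integral_mult_left)
        then show ?thesis by (simp only: mult.commute)
      qed
      also have "integral {z..x} (\<lambda>y. f (y, z) * k (x, y)) = kx (x, z) + ky (x, z) + f (x, z)"
        using kernel_pde[OF KE Ck Cf _ x1, of z] z x by simp
      finally show "integral {z..x} (\<lambda>y. k (x, y) * f (y, z) * v z) = kx (x, z) * v z + ky (x, z) * v z + f (x, z) * v z"
        by (simp add: algebra_simps)
    qed
    also have "\<dots> = Ie + Id + A x"
    proof -
      have i1: "(\<lambda>z. kx (x, z) * v z) integrable_on {0..x}" "(\<lambda>z. ky (x, z) * v z) integrable_on {0..x}"
        "(\<lambda>z. f (x, z) * v z) integrable_on {0..x}"
        using cc by (auto intro!: integrable_continuous_real continuous_intros)
      show ?thesis unfolding Ie_def Id_def A_def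
        by (simp add: integral_add[OF integrable_add[OF i1(1,2)] i1(3)] integral_add[OF i1(1,2)])
    qed
    finally show ?thesis .
  qed
  have "vt x = v' x + g x * v 0 + A x" using vt x by (simp add: A_def)
  then show ?thesis
    unfolding L0 IBP K1 Fub by (simp add: Ie_def algebra_simps)
qed

lemma deriv_nonpos_mono:
  fixes f :: "real \<Rightarrow> real"
  assumes ab: "a \<le> b"
    and d: "\<And>x. x \<in> {a..b} \<Longrightarrow> (f has_real_derivative f' x) (at x within {a..b})"
    and n: "\<And>x. x \<in> {a..b} \<Longrightarrow> f' x \<le> 0"
  shows "f b \<le> f a"
proof -
  have d': "\<And>x. \<lbrakk>a \<le> x; x \<le> b\<rbrakk> \<Longrightarrow> (f has_derivative (\<lambda>h. h * f' x)) (at x within {a..b})"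
  proof -
    fix x assume "a \<le> x" "x \<le> b"
    then have "(f has_derivative (*) (f' x)) (at x within {a..b})" using d by (simp add: has_field_derivative_def)
    then show "(f has_derivative (\<lambda>h. h * f' x)) (at x within {a..b})"
      by (rule has_derivative_eq_rhs) (auto simp: fun_eq_iff)
  qed
  obtain \<xi> where \<xi>: "\<xi> \<in> {a..b}" and e: "f b - f a = (\<lambda>h. h * f' \<xi>) (b - a)"
    using mvt_very_simple[OF ab d'] by blast
  have "(b - a) * f' \<xi> \<le> 0" using ab n[OF \<xi>] by (simp add: mult_nonneg_nonpos)
  then show ?thesis using e by simp
qed

lemma cs_L1:
  fixes h :: "real \<Rightarrow> real"
  assumes c: "continuous_on {0..a} h" and a: "0 \<le> a"
  shows "(integral {0..a} (\<lambda>y. \<bar>h y\<bar>))^2 \<le> a * integral {0..a} (\<lambda>y. (h y)^2)"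
proof (cases "a = 0")
  case True then show ?thesis by simp
next
  case False
  with a have a0: "a > 0" by simp
  define m where "m = integral {0..a} (\<lambda>y. \<bar>h y\<bar>)"
  have i1: "(\<lambda>y. \<bar>h y\<bar>) integrable_on {0..a}" and i2: "(\<lambda>y. (h y)^2) integrable_on {0..a}"
    using c by (auto intro!: integrable_continuous_real continuous_intros)
  have pw: "\<bar>h y\<bar> * m \<le> (a * (h y)^2 + m^2 / a) / 2" for y
  proof -
    have "0 \<le> (a * \<bar>h y\<bar> - m)^2" by simp
    then have "2 * a * (\<bar>h y\<bar> * m) \<le> a * (a * (h y)^2) + m^2"
      by (simp add: power2_eq_square algebra_simps)
    then show ?thesis using a0 by (simp add: field_simps power2_eq_square)
  qed
  have "integral {0..a} (\<lambda>y. \<bar>h y\<bar> * m) \<le> integral {0..a} (\<lambda>y. (a * (h y)^2 + m^2 / a) / 2)"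
    by (rule integral_le) (use c i1 i2 pw in \<open>auto intro!: integrable_continuous_real continuous_intros\<close>)
  moreover have "integral {0..a} (\<lambda>y. \<bar>h y\<bar> * m) = m * m" by (simp add: m_def)
  moreover have "integral {0..a} (\<lambda>y. (a * (h y)^2 + m^2 / a) / 2) = (a * integral {0..a} (\<lambda>y. (h y)^2) + m^2) / 2"
  proof -
    have "integral {0..a} (\<lambda>y. (a * (h y)^2 + m^2 / a) / 2) = integral {0..a} (\<lambda>y. a * (h y)^2 + m^2 / a) / 2"
      by simp
    also have "integral {0..a} (\<lambda>y. a * (h y)^2 + m^2 / a) = a * integral {0..a} (\<lambda>y. (h y)^2) + m^2"
    proof -
      have "integral {0..a} (\<lambda>y. a * (h y)^2 + m^2 / a) = integral {0..a} (\<lambda>y. a * (h y)^2) + integral {0..a} (\<lambda>y. m^2 / a)"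
        by (rule integral_add) (use integrable_on_cmult_left[OF i2, of a] in auto)
      then show ?thesis using a0 by simp
    qed
    finally show ?thesis .
  qed
  ultimately have "m * m \<le> (a * integral {0..a} (\<lambda>y. (h y)^2) + m^2) / 2" by linarith
  then show ?thesis by (simp add: m_def power2_eq_square field_simps)
qed

lemma volterra_bound:
  fixes h :: "real \<Rightarrow> real" and k :: "real \<times> real \<Rightarrow> real"
  assumes ck: "continuous_on Tri k" and kb: "\<And>p. p \<in> Tri \<Longrightarrow> \<bar>k p\<bar> \<le> K"
    and ch: "continuous_on {0..1} h" and x: "x \<in> {0..1}"
  shows "\<bar>integral {0..x} (\<lambda>y. k (x, y) * h y)\<bar> \<le> K * integral {0..x} (\<lambda>y. \<bar>h y\<bar>)"
proof -
  have chx: "continuous_on {0..x} h" using ch x by (auto intro: continuous_on_subset)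
  have "\<bar>integral {0..x} (\<lambda>y. k (x, y) * h y)\<bar> \<le> integral {0..x} (\<lambda>y. K * \<bar>h y\<bar>)"
  proof (rule int_bound)
    show "(\<lambda>y. K * \<bar>h y\<bar>) integrable_on {0..x}" using chx by (auto intro!: integrable_continuous_real continuous_intros)
    fix y assume y: "y \<in> {0..x}"
    have "\<bar>k (x, y)\<bar> \<le> K" using kb y x by auto
    then show "\<bar>k (x, y) * h y\<bar> \<le> K * \<bar>h y\<bar>" by (simp add: abs_mult mult_right_mono)
  qed
  then show ?thesis by simp
qed

lemma sq_sum_le: "(a + b)^2 \<le> 2 * a^2 + 2 * (b::real)^2"
proof -
  have "0 \<le> (a - b)^2" by simp
  then show ?thesis by (simp add: power2_eq_square algebra_simps)
qed

lemma volterra_sq: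
  fixes h :: "real \<Rightarrow> real" and k :: "real \<times> real \<Rightarrow> real"
  assumes ck: "continuous_on Tri k" and kb: "\<And>p. p \<in> Tri \<Longrightarrow> \<bar>k p\<bar> \<le> K" and K: "K \<ge> 0"
    and ch: "continuous_on {0..1} h" and x: "x \<in> {0..1}"
  shows "(integral {0..x} (\<lambda>y. k (x, y) * h y))^2 \<le> K^2 * (x * integral {0..x} (\<lambda>y. (h y)^2))"
proof -
  define I where "I = integral {0..x} (\<lambda>y. k (x, y) * h y)"
  define m where "m = integral {0..x} (\<lambda>y. \<bar>h y\<bar>)"
  have chx: "continuous_on {0..x} h" using ch x by (auto intro: continuous_on_subset)
  have m0: "m \<ge> 0" unfolding m_def
    by (rule integral_nonneg) (use chx in \<open>auto intro!: integrable_continuous_real continuous_intros\<close>)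
  have "\<bar>I\<bar> \<le> K * m" unfolding I_def m_def by (rule volterra_bound[OF ck kb ch x])
  then have "\<bar>I\<bar>^2 \<le> (K * m)^2" by (rule power_mono) simp
  also have "\<dots> = K^2 * m^2" by (simp add: power_mult_distrib)
  also have "\<dots> \<le> K^2 * (x * integral {0..x} (\<lambda>y. (h y)^2))"
    unfolding m_def by (rule mult_left_mono[OF cs_L1[OF chx]]) (use x in auto)
  finally show ?thesis by (simp add: I_def)
qed

lemma gronwall_volterra:
  fixes h W :: "real \<Rightarrow> real" and k :: "real \<times> real \<Rightarrow> real"
  assumes ck: "continuous_on Tri k" and kb: "\<And>p. p \<in> Tri \<Longrightarrow> \<bar>k p\<bar> \<le> K" and K: "K \<ge> 0"
    and ch: "continuous_on {0..1} h" and cW: "continuous_on {0..1} W"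
    and eq: "\<And>x. x \<in> {0..1} \<Longrightarrow> h x = W x + integral {0..x} (\<lambda>y. k (x, y) * h y)"
  shows "integral {0..1} (\<lambda>x. (h x)^2) \<le> 2 * exp (2 * K^2) * integral {0..1} (\<lambda>x. (W x)^2)"
proof -
  define U where "U x = integral {0..x} (\<lambda>y. (h y)^2)" for x
  define Q where "Q x = integral {0..x} (\<lambda>y. (W y)^2)" for x
  have U0: "U x \<ge> 0" if "x \<in> {0..1}" for x
    unfolding U_def
    by (rule integral_nonneg) (use ch that in \<open>auto intro!: integrable_continuous_real continuous_intros intro: continuous_on_subset\<close>)
  have pw: "(h x)^2 \<le> 2 * (W x)^2 + 2 * K^2 * U x" if x: "x \<in> {0..1}" for x
  proof -
    have "(h x)^2 \<le> 2 * (W x)^2 + 2 * (integral {0..x} (\<lambda>y. k (x, y) * h y))^2"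
      using eq[OF x] sq_sum_le by metis
    also have "(integral {0..x} (\<lambda>y. k (x, y) * h y))^2 \<le> K^2 * (x * U x)"
      unfolding U_def by (rule volterra_sq[OF ck kb K ch x])
    also have "x * U x \<le> U x" using x U0[OF x] by (simp add: mult_left_le_one_le)
    finally show ?thesis using K by (simp add: mult_left_mono)
  qed
  define \<psi> where "\<psi> x = exp (- 2 * K^2 * x) * U x - 2 * Q x" for x
  have d: "(\<psi> has_real_derivative (exp (- 2 * K^2 * x) * (- 2 * K^2) * U x + exp (- 2 * K^2 * x) * (h x)^2 - 2 * (W x)^2))
      (at x within {0..1})" if x: "x \<in> {0..1}" for x
  proof -
    have dU: "(U has_real_derivative (h x)^2) (at x within {0..1})"
      unfolding U_def by (rule integral_has_real_derivative) (use ch x in \<open>auto intro!: continuous_intros\<close>)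
    have dQ: "(Q has_real_derivative (W x)^2) (at x within {0..1})"
      unfolding Q_def by (rule integral_has_real_derivative) (use cW x in \<open>auto intro!: continuous_intros\<close>)
    show ?thesis unfolding \<psi>_def
      by (rule derivative_eq_intros dU dQ refl | simp)+
  qed
  have "\<psi> 1 \<le> \<psi> 0"
  proof (rule deriv_nonpos_mono[OF _ d])
    fix x :: real assume x: "x \<in> {0..1}"
    have e1: "exp (- 2 * K^2 * x) \<le> 1" using x by simp
    have "exp (- 2 * K^2 * x) * (- 2 * K^2) * U x + exp (- 2 * K^2 * x) * (h x)^2
        = exp (- 2 * K^2 * x) * ((h x)^2 - 2 * K^2 * U x)" by (simp add: algebra_simps)
    also have "\<dots> \<le> exp (- 2 * K^2 * x) * (2 * (W x)^2)"
      by (rule mult_left_mono) (use pw[OF x] in auto)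
    also have "\<dots> \<le> 1 * (2 * (W x)^2)" by (rule mult_right_mono[OF e1]) simp
    finally show "exp (- 2 * K^2 * x) * (- 2 * K^2) * U x + exp (- 2 * K^2 * x) * (h x)^2 - 2 * (W x)^2 \<le> 0"
      by simp
  qed auto
  then have "exp (- 2 * K^2) * U 1 \<le> 2 * Q 1" by (simp add: \<psi>_def U_def Q_def)
  then have "exp (2 * K^2) * (exp (- 2 * K^2) * U 1) \<le> exp (2 * K^2) * (2 * Q 1)" by simp
  then show ?thesis by (simp add: U_def Q_def mult.assoc[symmetric] mult_exp_exp)
qed

lemma transform_norm_bound:
  fixes h W :: "real \<Rightarrow> real" and k :: "real \<times> real \<Rightarrow> real"
  assumes ck: "continuous_on Tri k" and kb: "\<And>p. p \<in> Tri \<Longrightarrow> \<bar>k p\<bar> \<le> K" and K: "K \<ge> 0"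
    and ch: "continuous_on {0..1} h" and cW: "continuous_on {0..1} W"
    and eq: "\<And>x. x \<in> {0..1} \<Longrightarrow> W x = h x - integral {0..x} (\<lambda>y. k (x, y) * h y)"
  shows "integral {0..1} (\<lambda>x. (W x)^2) \<le> (2 + 2 * K^2) * integral {0..1} (\<lambda>x. (h x)^2)"
proof -
  define H where "H = integral {0..1} (\<lambda>x. (h x)^2)"
  have ih: "(\<lambda>x. (h x)^2) integrable_on {0..1}" using ch by (auto intro!: integrable_continuous_real continuous_intros)
  have pw: "(W x)^2 \<le> 2 * (h x)^2 + 2 * K^2 * H" if x: "x \<in> {0..1}" for x
  proof -
    have "(W x)^2 \<le> 2 * (h x)^2 + 2 * (- integral {0..x} (\<lambda>y. k (x, y) * h y))^2"
      using eq[OF x] sq_sum_le by (metis diff_conv_add_uminus)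
    also have "(- integral {0..x} (\<lambda>y. k (x, y) * h y))^2 \<le> K^2 * (x * integral {0..x} (\<lambda>y. (h y)^2))"
      using volterra_sq[OF ck kb K ch x] by simp
    also have "x * integral {0..x} (\<lambda>y. (h y)^2) \<le> H"
    proof -
      have "integral {0..x} (\<lambda>y. (h y)^2) \<le> H" unfolding H_def
        by (rule integral_subset_le) (use x ch in \<open>auto intro!: integrable_continuous_real continuous_intros intro: continuous_on_subset\<close>)
      moreover have "integral {0..x} (\<lambda>y. (h y)^2) \<ge> 0"
        by (rule integral_nonneg) (use x ch in \<open>auto intro!: integrable_continuous_real continuous_intros intro: continuous_on_subset\<close>)
      ultimately show ?thesis using x by (meson atLeastAtMost_iff dual_order.trans mult_left_le_one_le)
    qed
    finally show ?thesis using K by (simp add: mult_left_mono)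
  qed
  have "integral {0..1} (\<lambda>x. (W x)^2) \<le> integral {0..1} (\<lambda>x. 2 * (h x)^2 + 2 * K^2 * H)"
    by (rule integral_le) (use pw ih cW ch in \<open>auto intro!: integrable_continuous_real continuous_intros\<close>)
  also have "integral {0..1} (\<lambda>x. 2 * (h x)^2 + 2 * K^2 * H) = 2 * H + 2 * K^2 * H"
  proof -
    have "integral {0..1} (\<lambda>x. 2 * (h x)^2 + 2 * K^2 * H) = integral {0..1} (\<lambda>x. 2 * (h x)^2) + integral {0..1} (\<lambda>x::real. 2 * K^2 * H)"
    proof -
      have i1: "(\<lambda>x. 2 * (h x)^2) integrable_on {0..1}" using integrable_on_cmult_left[OF ih, of 2] by simp
      have i2: "(\<lambda>x::real. 2 * K^2 * H) integrable_on {0..1}" by (intro integrable_continuous_real continuous_intros)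
      show ?thesis by (rule integral_add[OF i1 i2])
    qed
    then show ?thesis by (simp add: H_def)
  qed
  finally show ?thesis by (simp add: H_def algebra_simps)
qed

locale sol =
  fixes u :: "real \<Rightarrow> real \<Rightarrow> real" and ux ut :: "real \<times> real \<Rightarrow> real"
  assumes cux: "continuous_on ({0..1} \<times> {0..}) ux" and cut: "continuous_on ({0..1} \<times> {0..}) ut"
    and D: "\<And>p. p \<in> {0..1} \<times> {0..} \<Longrightarrow>
           ((\<lambda>(x, t). u x t) has_derivative (\<lambda>(a, b). ux p * a + ut p * b)) (at p within {0..1} \<times> {0..})"
begin

lemma du_x:
  assumes t: "t \<ge> 0" and y: "y \<in> {0..1}"
  shows "((\<lambda>y. u y t) has_real_derivative ux (y, t)) (at y within {0..1})"
proof -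
  have l: "((\<lambda>y. (y, t)) has_derivative (\<lambda>h. (h, 0))) (at y within {0..1})"
    by (auto intro!: derivative_eq_intros)
  have "((\<lambda>y. (\<lambda>(x, t). u x t) (y, t)) has_derivative (\<lambda>h. (\<lambda>(a, b). ux (y, t) * a + ut (y, t) * b) (h, 0))) (at y within {0..1})"
    by (rule has_derivative_in_compose2[OF D _ y l]) (use t in auto)
  then have "((\<lambda>y. u y t) has_derivative (\<lambda>h. ux (y, t) * h)) (at y within {0..1})" by simp
  then show ?thesis unfolding has_field_derivative_def by simp
qed

lemma du_t:
  assumes t: "t \<ge> 0" and y: "y \<in> {0..1}"
  shows "((\<lambda>t. u y t) has_real_derivative ut (y, t)) (at t within {0..})"
proof -
  have l: "((\<lambda>t. (y, t)) has_derivative (\<lambda>h. (0, h))) (at t within {0..})"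
    by (auto intro!: derivative_eq_intros)
  have "((\<lambda>t. (\<lambda>(x, t). u x t) (y, t)) has_derivative (\<lambda>h. (\<lambda>(a, b). ux (y, t) * a + ut (y, t) * b) (0, h))) (at t within {0..})"
    by (rule has_derivative_in_compose2[OF D _ t[folded atLeast_iff] l]) (use y in auto)
  then have "((\<lambda>t. u y t) has_derivative (\<lambda>h. ut (y, t) * h)) (at t within {0..})" by simp
  then show ?thesis unfolding has_field_derivative_def by simp
qed

lemma cu: "continuous_on ({0..1} \<times> {0..}) (\<lambda>(x, t). u x t)"
  using D by (meson continuous_on_eq_continuous_within has_derivative_continuous)

lemma cu_comp:
  assumes "continuous_on A p" "continuous_on A q" "\<And>a. a \<in> A \<Longrightarrow> p a \<in> {0..1}" "\<And>a. a \<in> A \<Longrightarrow> q a \<ge> 0"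
  shows "continuous_on A (\<lambda>a. u (p a) (q a))"
proof -
  have "continuous_on A (\<lambda>a. (\<lambda>(x, t). u x t) (p a, q a))"
    by (rule continuous_on_compose2[OF cu]) (use assms in \<open>auto intro!: continuous_intros\<close>)
  then show ?thesis by simp
qed

lemma cS_comp:
  assumes c: "continuous_on ({0..1} \<times> {0..}) F"
    and "continuous_on A p" "continuous_on A q" "\<And>a. a \<in> A \<Longrightarrow> p a \<in> {0..1}" "\<And>a. a \<in> A \<Longrightarrow> q a \<ge> 0"
  shows "continuous_on A (\<lambda>a. F (p a, q a))"
  by (rule continuous_on_compose2[OF c]) (use assms in \<open>auto intro!: continuous_intros\<close>)

end

locale clsys = sol u ux ut
  for u :: "real \<Rightarrow> real \<Rightarrow> real" and ux ut :: "real \<times> real \<Rightarrow> real" +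
  fixes g :: "real \<Rightarrow> real" and f fx fy k kx ky :: "real \<times> real \<Rightarrow> real"
  assumes KE: "kernel_equation g f k" and Ck: "C1_on_Tri k kx ky" and Cf: "C1_on_Tri f fx fy"
    and cg: "continuous_on {0..1} g"
    and pde: "\<And>x t. x \<in> {0..<1} \<Longrightarrow> t \<ge> 0 \<Longrightarrow>
           ut (x, t) = ux (x, t) + g x * u 0 t + integral {0..x} (\<lambda>y. f (x, y) * u y t)"
begin

definition "Wf x t = u x t - integral {0..x} (\<lambda>y. k (x, y) * u y t)"
definition "Wsc x t = u x t - x * integral {0..1} (\<lambda>s. k (x, x * s) * u (x * s) t)"
definition "Wtf x t = ut (x, t) - x * integral {0..1} (\<lambda>s. k (x, x * s) * ut (x * s, t))"
definition "Wxf x t = ux (x, t) - k (x, x) * u x t - integral {0..x} (\<lambda>y. kx (x, y) * u y t)"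

lemma ck: "continuous_on Tri k" using Ck by (rule C1_cont)

lemma memT: "x \<in> {0..1} \<Longrightarrow> s \<in> {0..1} \<Longrightarrow> (x, x * s) \<in> Tri"
  by (auto intro: mult_left_le mult_le_one)

lemma mem01: "x \<in> {0..1} \<Longrightarrow> s \<in> {0..1} \<Longrightarrow> x * s \<in> {0..(1::real)}"
  by (auto intro: mult_le_one)

lemma Wsc_eq: "x \<in> {0..1} \<Longrightarrow> Wsc x t = Wf x t"
  unfolding Wsc_def Wf_def using integral_scale01[of x "\<lambda>y. k (x, y) * u y t"] by simp

lemma cont_param:
  assumes c: "continuous_on ({0..1} \<times> {0..}) F"
  shows "continuous_on ({0..} \<times> {0..1}) (\<lambda>p. integral (cbox 0 1) (\<lambda>s. k (snd p, snd p * s) * F (snd p * s, fst p)))"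
proof (rule integral_continuous_on_param)
  have m: "\<And>p. p \<in> ({0..} \<times> {0..1}) \<times> cbox 0 1 \<Longrightarrow> (snd (fst p), snd (fst p) * snd p) \<in> Tri"
    using memT by auto
  have "continuous_on (({0..} \<times> {0..1}) \<times> cbox 0 1) (\<lambda>p. k (snd (fst p), snd (fst p) * snd p))"
    by (rule cont_on_Tri_comp[OF ck _ m]) (intro continuous_intros)
  moreover have "continuous_on (({0..} \<times> {0..1}) \<times> cbox 0 1) (\<lambda>p. F (snd (fst p) * snd p, fst (fst p)))"
    by (rule cS_comp[OF c]) (auto intro!: continuous_intros intro: mult_le_one)
  ultimately show "continuous_on (({0..} \<times> {0..1}) \<times> cbox 0 1)
      (\<lambda>(p, s). k (snd p, snd p * s) * F (snd p * s, fst p))"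
    by (auto simp: split_beta intro!: continuous_intros)
qed

lemma cWsc: "continuous_on ({0..} \<times> {0..1}) (\<lambda>(t, x). Wsc x t)"
proof -
  have c: "continuous_on ({0..1} \<times> {0..}) (\<lambda>p. u (fst p) (snd p))" using cu by (simp add: split_beta)
  have "continuous_on ({0..} \<times> {0..1}) (\<lambda>p. u (snd p) (fst p))"
    by (rule cu_comp) (auto intro!: continuous_intros)
  moreover have "continuous_on ({0..} \<times> {0..1}) (\<lambda>p. integral (cbox 0 1) (\<lambda>s. k (snd p, snd p * s) * (\<lambda>p. u (fst p) (snd p)) (snd p * s, fst p)))"
    by (rule cont_param[OF c])
  ultimately show ?thesis unfolding Wsc_def
    by (auto simp: split_beta intro!: continuous_intros)
qed

lemma cWtf: "continuous_on ({0..} \<times> {0..1}) (\<lambda>(t, x). Wtf x t)"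
proof -
  have "continuous_on ({0..} \<times> {0..1}) (\<lambda>p. ut (snd p, fst p))"
    by (rule cS_comp[OF cut]) (auto intro!: continuous_intros)
  moreover have "continuous_on ({0..} \<times> {0..1}) (\<lambda>p. integral (cbox 0 1) (\<lambda>s. k (snd p, snd p * s) * ut (snd p * s, fst p)))"
    by (rule cont_param[OF cut])
  ultimately show ?thesis unfolding Wtf_def
    by (auto simp: split_beta intro!: continuous_intros)
qed

lemma cWf_x:
  assumes t: "t \<ge> 0" shows "continuous_on {0..1} (\<lambda>x. Wf x t)"
proof -
  have "continuous_on {0..1} (\<lambda>x. (\<lambda>(t, x). Wsc x t) (t, x))"
    by (rule continuous_on_compose2[OF cWsc]) (use t in \<open>auto intro!: continuous_intros\<close>)
  then show ?thesis by (rule continuous_on_eq) (simp add: Wsc_eq)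
qed

lemma cu_x: assumes t: "t \<ge> 0" shows "continuous_on {0..1} (\<lambda>x. u x t)"
  by (rule cu_comp) (use t in \<open>auto intro!: continuous_intros\<close>)

lemma cux_x: assumes t: "t \<ge> 0" shows "continuous_on {0..1} (\<lambda>x. ux (x, t))"
  by (rule cS_comp[OF cux]) (use t in \<open>auto intro!: continuous_intros\<close>)

lemma dWt:
  assumes x: "x \<in> {0..1}" and t: "t \<ge> 0"
  shows "((\<lambda>t. Wsc x t) has_real_derivative Wtf x t) (at t within {0..})"
proof -
  have L: "((\<lambda>t. integral (cbox 0 1) (\<lambda>s. k (x, x * s) * u (x * s) t)) has_real_derivative
      integral (cbox 0 1) (\<lambda>s. k (x, x * s) * ut (x * s, t))) (at t within {0..})"
  proof (rule leibniz_rule_field_derivative)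
    fix t' s :: real assume t': "t' \<in> {0..}" and s: "s \<in> cbox 0 (1::real)"
    show "((\<lambda>t. k (x, x * s) * u (x * s) t) has_real_derivative k (x, x * s) * ut (x * s, t')) (at t' within {0..})"
      using du_t[of t' "x * s"] t' s x mem01[of x s] by (auto intro!: derivative_eq_intros)
  next
    fix t' :: real assume t': "t' \<in> {0..}"
    have "continuous_on (cbox 0 1) (\<lambda>s. k (x, x * s) * u (x * s) t')"
    proof (intro continuous_intros)
      show "continuous_on (cbox 0 1) (\<lambda>s. k (x, x * s))"
        by (rule cont_on_Tri_comp[OF ck]) (use x memT in \<open>auto intro!: continuous_intros\<close>)
      show "continuous_on (cbox 0 1) (\<lambda>s. u (x * s) t')"
        by (rule cu_comp) (use x t' mem01 in \<open>auto intro!: continuous_intros\<close>)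
    qed
    then show "(\<lambda>s. k (x, x * s) * u (x * s) t') integrable_on cbox 0 1"
      by (rule integrable_continuous)
  next
    show "continuous_on ({0..} \<times> cbox 0 1) (\<lambda>(t, s). k (x, x * s) * ut (x * s, t))"
    proof -
      have "continuous_on ({0..} \<times> cbox 0 1) (\<lambda>p. k (x, x * snd p))"
        by (rule cont_on_Tri_comp[OF ck]) (use x memT in \<open>auto intro!: continuous_intros\<close>)
      moreover have "continuous_on ({0..} \<times> cbox 0 1) (\<lambda>p. ut (x * snd p, fst p))"
        by (rule cS_comp[OF cut]) (use x mem01 in \<open>auto intro!: continuous_intros\<close>)
      ultimately show ?thesis by (auto simp: split_beta intro!: continuous_intros)
    qed
  qed (use t in auto)
  show ?thesis unfolding Wsc_def Wtf_def
    using du_t[OF t x] L by (auto intro!: derivative_eq_intros)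
qed

lemma dWx:
  assumes x: "x \<in> {0..1}" and t: "t \<ge> 0"
  shows "((\<lambda>x. Wf x t) has_real_derivative Wxf x t) (at x within {0..1})"
proof -
  have Cv: "C1_on_Tri (\<lambda>p. u (snd p) t) (\<lambda>p. 0) (\<lambda>p. ux (snd p, t))"
    by (rule C1_snd) (use du_x[OF t] cux_x[OF t] in auto)
  have C: "C1_on_Tri (\<lambda>p. k p * u (snd p) t) (\<lambda>p. kx p * u (snd p) t + k p * 0) (\<lambda>p. ky p * u (snd p) t + k p * ux (snd p, t))"
    by (rule C1_mult[OF Ck Cv])
  have "((\<lambda>x. integral {0..x} (\<lambda>y. k (x, y) * u y t)) has_real_derivative
      (k (x, x) * u x t + integral {0..x} (\<lambda>y. kx (x, y) * u y t))) (at x within {0..1})"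
    using VL[OF C x] by simp
  then show ?thesis unfolding Wf_def Wxf_def
    using du_x[OF t x] by (auto intro!: derivative_eq_intros)
qed

lemma Wt_eq_Wx:
  assumes x: "x \<in> {0..<1}" and t: "t \<ge> 0"
  shows "Wtf x t = Wxf x t"
proof -
  have "ut (x, t) - integral {0..x} (\<lambda>y. k (x, y) * ut (y, t))
       = ux (x, t) - k (x, x) * u x t - integral {0..x} (\<lambda>y. kx (x, y) * u y t)"
    by (rule transform_identity[OF KE Ck Cf cg, where v="\<lambda>y. u y t" and v'="\<lambda>y. ux (y, t)" and vt="\<lambda>y. ut (y, t)"])
       (use du_x[OF t] cux_x[OF t] pde t x in auto)
  moreover have "integral {0..x} (\<lambda>y. k (x, y) * ut (y, t)) = x * integral {0..1} (\<lambda>s. k (x, x * s) * ut (x * s, t))"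
    using integral_scale01[of x "\<lambda>y. k (x, y) * ut (y, t)"] x by simp
  ultimately show ?thesis unfolding Wtf_def Wxf_def by simp
qed

end

context clsys begin

definition "V t = integral {0..1} (\<lambda>x. exp x * (Wsc x t)^2)"

lemma dV:
  assumes t: "t \<ge> 0"
  shows "(V has_real_derivative integral {0..1} (\<lambda>x. exp x * (2 * Wsc x t * Wtf x t))) (at t within {0..})"
  unfolding V_def cbox_interval[symmetric]
proof (rule leibniz_rule_field_derivative)
  fix t' x :: real assume t': "t' \<in> {0..}" and x: "x \<in> cbox 0 1"
  show "((\<lambda>t. exp x * (Wsc x t)^2) has_real_derivative exp x * (2 * Wsc x t' * Wtf x t')) (at t' within {0..})"
    using dWt[of x t'] x t' by (auto intro!: derivative_eq_intros)
next
  fix t' :: real assume t': "t' \<in> {0..}"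
  have "continuous_on {0..1} (\<lambda>x. (\<lambda>(t, x). Wsc x t) (t', x))"
    by (rule continuous_on_compose2[OF cWsc]) (use t' in \<open>auto intro!: continuous_intros\<close>)
  then show "(\<lambda>x. exp x * (Wsc x t')^2) integrable_on cbox 0 1"
    unfolding cbox_interval by (auto intro!: integrable_continuous_real continuous_intros)
next
  show "continuous_on ({0..} \<times> cbox 0 1) (\<lambda>(t, x). exp x * (2 * Wsc x t * Wtf x t))"
    unfolding cbox_interval using cWsc cWtf
    by (auto simp: split_beta intro!: continuous_intros)
qed (use t in auto)

lemma V_eq: "V t = integral {0..1} (\<lambda>x. exp x * (Wf x t)^2)"
  unfolding V_def by (rule integral_cong) (simp add: Wsc_eq)

lemma dV_eq:
  assumes t: "t \<ge> 0"
  shows "integral {0..1} (\<lambda>x. exp x * (2 * Wsc x t * Wtf x t)) = exp 1 * (Wf 1 t)^2 - (Wf 0 t)^2 - V t"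
proof -
  have ftc: "((\<lambda>x. exp x * (Wf x t)^2 + exp x * (2 * Wf x t * Wxf x t)) has_integral
      (exp 1 * (Wf 1 t)^2 - exp 0 * (Wf 0 t)^2)) {0..1}"
    by (rule fundamental_theorem_of_calculus)
       (use dWx t in \<open>auto intro!: derivative_eq_intros simp: has_real_derivative_iff_has_vector_derivative[symmetric]\<close>)
  have iV: "((\<lambda>x. exp x * (Wf x t)^2) has_integral V t) {0..1}"
    unfolding V_eq using cWf_x[OF t] by (auto intro!: integrable_integral integrable_continuous_real continuous_intros)
  have "((\<lambda>x. exp x * (2 * Wf x t * Wxf x t)) has_integral (exp 1 * (Wf 1 t)^2 - (Wf 0 t)^2 - V t)) {0..1}"
    using has_integral_diff[OF ftc iV] by simp
  moreover have "integral {0..1} (\<lambda>x. exp x * (2 * Wsc x t * Wtf x t)) = integral {0..1} (\<lambda>x. exp x * (2 * Wf x t * Wxf x t))"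
  proof (rule integral_spike[of "{1}"])
    fix x :: real assume "x \<in> {0..1} - {1}"
    then have "x \<in> {0..<1}" by auto
    then show "exp x * (2 * Wf x t * Wxf x t) = exp x * (2 * Wsc x t * Wtf x t)"
      using Wt_eq_Wx[OF _ t] Wsc_eq by auto
  qed auto
  ultimately show ?thesis by (simp add: integral_unique)
qed

end

locale clsys2 = clsys u ux ut g f fx fy k kx ky
  for u :: "real \<Rightarrow> real \<Rightarrow> real" and ux ut :: "real \<times> real \<Rightarrow> real"
  and g :: "real \<Rightarrow> real" and f fx fy k kx ky :: "real \<times> real \<Rightarrow> real" +
  fixes khat :: "real \<times> real \<Rightarrow> real" and eps K :: real
  assumes bnd: "\<And>t. t \<ge> 0 \<Longrightarrow> u 1 t = integral {0..1} (\<lambda>y. khat (1, y) * u y t)"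
    and ckh: "continuous_on Tri khat"
    and close: "\<And>y. y \<in> {0..1} \<Longrightarrow> \<bar>khat (1, y) - k (1, y)\<bar> \<le> eps"
    and kb: "\<And>p. p \<in> Tri \<Longrightarrow> \<bar>k p\<bar> \<le> K" and K0: "K \<ge> 0" and eps0: "eps \<ge> 0"
    and small: "exp 1 * eps^2 * (2 * exp (2 * K^2)) \<le> 1/2"
begin

lemma W1:
  assumes t: "t \<ge> 0"
  shows "(Wf 1 t)^2 \<le> eps^2 * integral {0..1} (\<lambda>y. (u y t)^2)"
proof -
  have c1: "continuous_on {0..1} (\<lambda>y. khat (1, y))" by (rule cont_slice_y[OF ckh]) simp
  have c2: "continuous_on {0..1} (\<lambda>y. k (1, y))" by (rule cont_slice_y[OF ck]) simp
  have cu: "continuous_on {0..1} (\<lambda>y. u y t)" by (rule cu_x[OF t])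
  have "Wf 1 t = integral {0..1} (\<lambda>y. khat (1, y) * u y t) - integral {0..1} (\<lambda>y. k (1, y) * u y t)"
    unfolding Wf_def using bnd[OF t] by simp
  also have "\<dots> = integral {0..1} (\<lambda>y. (khat (1, y) - k (1, y)) * u y t)"
    by (subst integral_diff[symmetric]) (use c1 c2 cu in \<open>auto intro!: integrable_continuous_real continuous_intros simp: algebra_simps\<close>)
  finally have e: "Wf 1 t = integral {0..1} (\<lambda>y. (khat (1, y) - k (1, y)) * u y t)" .
  have "\<bar>Wf 1 t\<bar> \<le> integral {0..1} (\<lambda>y. eps * \<bar>u y t\<bar>)"
    unfolding e
  proof (rule int_bound)
    show "(\<lambda>y. eps * \<bar>u y t\<bar>) integrable_on {0..1}"
      using cu by (auto intro!: integrable_continuous_real continuous_intros)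
    fix y :: real assume y: "y \<in> {0..1}"
    show "\<bar>(khat (1, y) - k (1, y)) * u y t\<bar> \<le> eps * \<bar>u y t\<bar>"
      using close[OF y] by (simp add: abs_mult mult_right_mono)
  qed
  also have "\<dots> = eps * integral {0..1} (\<lambda>y. \<bar>u y t\<bar>)" by simp
  finally have "\<bar>Wf 1 t\<bar>^2 \<le> (eps * integral {0..1} (\<lambda>y. \<bar>u y t\<bar>))^2"
    by (rule power_mono) simp
  also have "\<dots> = eps^2 * (integral {0..1} (\<lambda>y. \<bar>u y t\<bar>))^2" by (simp add: power_mult_distrib)
  also have "\<dots> \<le> eps^2 * (1 * integral {0..1} (\<lambda>y. (u y t)^2))"
    by (rule mult_left_mono[OF cs_L1[OF cu]]) auto
  finally show ?thesis by simp
qed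

lemma normu:
  assumes t: "t \<ge> 0"
  shows "integral {0..1} (\<lambda>x. (u x t)^2) \<le> 2 * exp (2 * K^2) * integral {0..1} (\<lambda>x. (Wf x t)^2)"
  by (rule gronwall_volterra[OF ck kb K0 cu_x[OF t] cWf_x[OF t]]) (auto simp: Wf_def)

lemma normW:
  assumes t: "t \<ge> 0"
  shows "integral {0..1} (\<lambda>x. (Wf x t)^2) \<le> (2 + 2 * K^2) * integral {0..1} (\<lambda>x. (u x t)^2)"
  by (rule transform_norm_bound[OF ck kb K0 cu_x[OF t] cWf_x[OF t]]) (auto simp: Wf_def)

lemma expsq: "0 \<le> x \<Longrightarrow> (w::real)^2 \<le> exp x * w^2"
  using mult_right_mono[of 1 "exp x" "w^2"] by simp

lemma WleV:
  assumes t: "t \<ge> 0"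
  shows "integral {0..1} (\<lambda>x. (Wf x t)^2) \<le> V t"
  unfolding V_eq
  by (rule integral_le) (use cWf_x[OF t] expsq in \<open>auto intro!: integrable_continuous_real continuous_intros\<close>)

lemma VleW:
  assumes t: "t \<ge> 0"
  shows "V t \<le> exp 1 * integral {0..1} (\<lambda>x. (Wf x t)^2)"
proof -
  have "V t \<le> integral {0..1} (\<lambda>x. exp 1 * (Wf x t)^2)"
    unfolding V_eq
    by (rule integral_le) (use cWf_x[OF t] in \<open>auto intro!: integrable_continuous_real continuous_intros mult_right_mono\<close>)
  then show ?thesis by simp
qed

lemma V0: assumes t: "t \<ge> 0" shows "V t \<ge> 0"
proof -
  have "0 \<le> integral {0..1} (\<lambda>x. (Wf x t)^2)"
    by (rule integral_nonneg) (use cWf_x[OF t] in \<open>auto intro!: integrable_continuous_real continuous_intros\<close>)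
  then show ?thesis using WleV[OF t] by simp
qed

lemma dV_neg:
  assumes t: "t \<ge> 0"
  shows "integral {0..1} (\<lambda>x. exp x * (2 * Wsc x t * Wtf x t)) \<le> - V t / 2"
proof -
  define Q where "Q = integral {0..1} (\<lambda>x. (Wf x t)^2)"
  define C where "C = 2 * exp (2 * K^2)"
  have Q0: "Q \<ge> 0" unfolding Q_def
    by (rule integral_nonneg) (use cWf_x[OF t] in \<open>auto intro!: integrable_continuous_real continuous_intros\<close>)
  have "integral {0..1} (\<lambda>x. exp x * (2 * Wsc x t * Wtf x t)) \<le> exp 1 * (Wf 1 t)^2 - V t"
    unfolding dV_eq[OF t] by simp
  also have "exp 1 * (Wf 1 t)^2 \<le> exp 1 * (eps^2 * integral {0..1} (\<lambda>y. (u y t)^2))"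
    by (rule mult_left_mono[OF W1[OF t]]) simp
  also have "\<dots> \<le> exp 1 * (eps^2 * (C * Q))"
    unfolding C_def Q_def by (intro mult_left_mono normu[OF t]) auto
  also have "\<dots> = (exp 1 * eps^2 * C) * Q" by simp
  also have "\<dots> \<le> (1/2) * Q"
    by (rule mult_right_mono) (use small Q0 in \<open>auto simp: C_def\<close>)
  also have "\<dots> \<le> (1/2) * V t" unfolding Q_def using WleV[OF t] by simp
  finally show ?thesis by simp
qed

lemma V_decay:
  assumes t: "t \<ge> 0"
  shows "V t \<le> exp (- t / 2) * V 0"
proof -
  define \<phi> where "\<phi> s = exp (s / 2) * V s" for s
  have "\<phi> t \<le> \<phi> 0"
  proof (rule deriv_nonpos_mono[OF t])
    fix s assume s: "s \<in> {0..t}"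
    have "(V has_real_derivative integral {0..1} (\<lambda>x. exp x * (2 * Wsc x s * Wtf x s))) (at s within {0..t})"
      by (rule has_field_derivative_subset[OF dV]) (use s in auto)
    then show "(\<phi> has_real_derivative (exp (s / 2) * (1/2) * V s + exp (s / 2) * integral {0..1} (\<lambda>x. exp x * (2 * Wsc x s * Wtf x s)))) (at s within {0..t})"
      unfolding \<phi>_def by (auto intro!: derivative_eq_intros)
  next
    fix s assume s: "s \<in> {0..t}"
    have "exp (s / 2) * integral {0..1} (\<lambda>x. exp x * (2 * Wsc x s * Wtf x s)) \<le> exp (s / 2) * (- V s / 2)"
      by (rule mult_left_mono[OF dV_neg]) (use s in auto)
    then show "exp (s / 2) * (1/2) * V s + exp (s / 2) * integral {0..1} (\<lambda>x. exp x * (2 * Wsc x s * Wtf x s)) \<le> 0"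
      by simp
  qed
  then have "exp (t / 2) * V t \<le> V 0" by (simp add: \<phi>_def)
  then have "exp (- t / 2) * (exp (t / 2) * V t) \<le> exp (- t / 2) * V 0" by simp
  then show ?thesis by (simp add: mult.assoc[symmetric] mult_exp_exp)
qed

lemma decay:
  assumes t: "t \<ge> 0"
  shows "integral {0..1} (\<lambda>x. (u x t)^2) \<le> (2 * exp (2 * K^2) * exp 1 * (2 + 2 * K^2)) * exp (- t / 2) * integral {0..1} (\<lambda>x. (u x 0)^2)"
proof -
  define C where "C = 2 * exp (2 * K^2)"
  have C0: "C \<ge> 0" by (simp add: C_def)
  have "integral {0..1} (\<lambda>x. (u x t)^2) \<le> C * integral {0..1} (\<lambda>x. (Wf x t)^2)"
    unfolding C_def by (rule normu[OF t])
  also have "\<dots> \<le> C * V t" by (rule mult_left_mono[OF WleV[OF t] C0])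
  also have "\<dots> \<le> C * (exp (- t / 2) * V 0)" by (rule mult_left_mono[OF V_decay[OF t] C0])
  also have "\<dots> \<le> C * (exp (- t / 2) * (exp 1 * integral {0..1} (\<lambda>x. (Wf x 0)^2)))"
    by (intro mult_left_mono VleW C0) auto
  also have "\<dots> \<le> C * (exp (- t / 2) * (exp 1 * ((2 + 2 * K^2) * integral {0..1} (\<lambda>x. (u x 0)^2))))"
    by (intro mult_left_mono normW C0) auto
  finally show ?thesis by (simp add: C_def mult_ac)
qed

end

lemma small_eps:
  fixes K e :: real
  assumes e0: "0 \<le> e" and e: "e < exp (- (1 + 2 * K^2)) / 2"
  shows "exp 1 * e^2 * (2 * exp (2 * K^2)) \<le> 1/2"
proof -
  have "e^2 \<le> (exp (- (1 + 2 * K^2)) / 2)^2" using e e0 by (intro power_mono) auto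
  also have "\<dots> = exp (- 2 - 4 * K^2) / 4"
    by (simp add: power2_eq_square mult_exp_exp algebra_simps)
  finally have "exp 1 * e^2 * (2 * exp (2 * K^2)) \<le> exp 1 * (exp (- 2 - 4 * K^2) / 4) * (2 * exp (2 * K^2))"
    by (intro mult_right_mono mult_left_mono) auto
  also have "\<dots> = (exp 1 * exp (- 2 - 4 * K^2) * exp (2 * K^2)) / 2"
    by (simp add: field_simps)
  also have "exp 1 * exp (- 2 - 4 * K^2) * exp (2 * K^2) = exp (1 + (- 2 - 4 * K^2) + 2 * K^2)"
    by (simp only: exp_add)
  also have "\<dots> \<le> exp 0"
    by (intro exp_mono) (use zero_le_power2[of K] in linarith)
  finally show ?thesis by simp
qed

theorem theorem4:
  fixes Bg Bg' Bf Bfx :: real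
  assumes "Bg > 0" and "Bg' > 0" and "Bf > 0" and "Bfx > 0"
  shows "\<exists>eps_star > 0. \<forall>g g' f fx fy k kx ky khat khx khy \<epsilon>.
     admissible_g Bg Bg' g g' \<and> admissible_f Bf Bfx f fx fy \<and>
     kernel_equation g f k \<and> continuous_on Tri k \<and> C1_on_Tri k kx ky \<and>
     C1_on_Tri khat khx khy \<and>
     0 < \<epsilon> \<and> \<epsilon> < eps_star \<and>
     (\<forall>p\<in>Tri. \<bar>k p - khat p\<bar> + \<bar>kx p - khx p\<bar> + \<bar>ky p - khy p\<bar> < \<epsilon>)
     \<longrightarrow> (\<exists>M c. M > 0 \<and> c > 0 \<and>
            (\<forall>u. closed_loop_solution g f khat u \<longrightarrow>
               (\<forall>t\<ge>0. L2norm (\<lambda>x. u x t) \<le> M * exp (- c * t / 2) * L2norm (\<lambda>x. u x 0))))"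
proof -
  define K where "K = Kb Bg Bf"
  have K0: "K \<ge> 0" using assms by (simp add: K_def Kb_def)
  define es where "es = exp (- (1 + 2 * K^2)) / 2"
  have es0: "es > 0" by (simp add: es_def)
  show ?thesis
  proof (rule exI[of _ es], intro conjI allI impI es0)
    fix g g' f fx fy k kx ky khat khx khy \<epsilon>
    assume H: "admissible_g Bg Bg' g g' \<and> admissible_f Bf Bfx f fx fy \<and>
     kernel_equation g f k \<and> continuous_on Tri k \<and> C1_on_Tri k kx ky \<and>
     C1_on_Tri khat khx khy \<and> 0 < \<epsilon> \<and> \<epsilon> < es \<and>
     (\<forall>p\<in>Tri. \<bar>k p - khat p\<bar> + \<bar>kx p - khx p\<bar> + \<bar>ky p - khy p\<bar> < \<epsilon>)"
    have AG: "admissible_g Bg Bg' g g'" and AF: "admissible_f Bf Bfx f fx fy"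
      and KE: "kernel_equation g f k" and kc: "continuous_on Tri k" and Ck: "C1_on_Tri k kx ky"
      and Ckh: "C1_on_Tri khat khx khy" and e0: "0 < \<epsilon>" and e1: "\<epsilon> < es"
      and cl: "\<forall>p\<in>Tri. \<bar>k p - khat p\<bar> + \<bar>kx p - khx p\<bar> + \<bar>ky p - khy p\<bar> < \<epsilon>"
      using H by auto
    have gb: "\<And>x. x \<in> {0..1} \<Longrightarrow> \<bar>g x\<bar> \<le> Bg" using AG by (simp add: admissible_g_def)
    have cg: "continuous_on {0..1} g"
      using AG unfolding admissible_g_def
      by (meson DERIV_continuous continuous_on_eq_continuous_within)
    have Cf: "C1_on_Tri f fx fy" and fb: "\<And>p. p \<in> Tri \<Longrightarrow> \<bar>f p\<bar> \<le> Bf"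
      using AF by (auto simp: admissible_f_def)
    have kb: "\<And>p. p \<in> Tri \<Longrightarrow> \<bar>k p\<bar> \<le> K"
      using kernel_bound[where Bg=Bg and Bf=Bf and g=g and f=f and k=k] gb fb KE kc assms
      unfolding K_def by auto
    have ckh: "continuous_on Tri khat" using Ckh by (rule C1_cont)
    have close: "\<And>y. y \<in> {0..1} \<Longrightarrow> \<bar>khat (1, y) - k (1, y)\<bar> \<le> \<epsilon>"
    proof -
      fix y :: real assume y: "y \<in> {0..1}"
      then have "(1, y) \<in> Tri" by simp
      with cl have "\<bar>k (1, y) - khat (1, y)\<bar> < \<epsilon>" by fastforce
      then show "\<bar>khat (1, y) - k (1, y)\<bar> \<le> \<epsilon>" by simp
    qed
    have small: "exp 1 * \<epsilon>^2 * (2 * exp (2 * K^2)) \<le> 1/2"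
      by (rule small_eps) (use e0 e1 in \<open>auto simp: es_def\<close>)
    define A where "A = 2 * exp (2 * K^2) * exp 1 * (2 + 2 * K^2)"
    have A0: "A > 0" unfolding A_def by (intro mult_pos_pos) (auto simp: add_pos_nonneg)
    have main: "\<forall>u. closed_loop_solution g f khat u \<longrightarrow>
               (\<forall>t\<ge>0. L2norm (\<lambda>x. u x t) \<le> sqrt A * exp (- (1/2) * t / 2) * L2norm (\<lambda>x. u x 0))"
    proof (intro allI impI)
      fix u t assume sol: "closed_loop_solution g f khat u" and t: "(t::real) \<ge> 0"
      obtain ux ut where
        cux: "continuous_on ({0..1} \<times> {0..}) ux" and cut: "continuous_on ({0..1} \<times> {0..}) ut"
        and D: "\<forall>p\<in>{0..1} \<times> {0..}.
           ((\<lambda>(x, t). u x t) has_derivative (\<lambda>(a, b). ux p * a + ut p * b)) (at p within {0..1} \<times> {0..})"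
        and pde: "\<forall>x\<in>{0..<1}. \<forall>t\<ge>0.
           ut (x, t) = ux (x, t) + g x * u 0 t + integral {0..x} (\<lambda>y. f (x, y) * u y t)"
        and bnd: "\<forall>t\<ge>0. u 1 t = integral {0..1} (\<lambda>y. khat (1, y) * u y t)"
        using sol unfolding closed_loop_solution_def by blast
      interpret S: clsys2 u ux ut g f fx fy k kx ky khat \<epsilon> K
      proof (unfold_locales)
        show "\<And>p. p \<in> {0..1} \<times> {0..} \<Longrightarrow>
           ((\<lambda>(x, t). u x t) has_derivative (\<lambda>(a, b). ux p * a + ut p * b)) (at p within {0..1} \<times> {0..})"
          using D by blast
      qed (use cux cut KE Ck Cf cg pde bnd ckh close kb K0 e0 small in auto)
      have dec: "integral {0..1} (\<lambda>x. (u x t)^2) \<le> A * exp (- t / 2) * integral {0..1} (\<lambda>x. (u x 0)^2)"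
        using S.decay[OF t] by (simp add: A_def)
      have "L2norm (\<lambda>x. u x t) \<le> sqrt (A * exp (- t / 2) * integral {0..1} (\<lambda>x. (u x 0)^2))"
        unfolding L2norm_def using dec by simp
      also have "\<dots> = sqrt A * sqrt (exp (- t / 2)) * L2norm (\<lambda>x. u x 0)"
        by (simp add: L2norm_def real_sqrt_mult)
      also have "sqrt (exp (- t / 2)) = exp (- (1/2) * t / 2)"
      proof -
        have "exp (- t / 2) = (exp (- (1/2) * t / 2))^2"
          by (simp add: power2_eq_square mult_exp_exp)
        then show ?thesis by simp
      qed
      finally show "L2norm (\<lambda>x. u x t) \<le> sqrt A * exp (- (1/2) * t / 2) * L2norm (\<lambda>x. u x 0)" .
    qed
    show "\<exists>M c. M > 0 \<and> c > 0 \<and>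
            (\<forall>u. closed_loop_solution g f khat u \<longrightarrow>
               (\<forall>t\<ge>0. L2norm (\<lambda>x. u x t) \<le> M * exp (- c * t / 2) * L2norm (\<lambda>x. u x 0)))"
      using A0 main by (intro exI[of _ "sqrt A"] exI[of _ "1/2::real"]) auto
  qed
qed


end
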